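(* Let $q$ be an odd prime power, $\omega$ a non-square in $\mathbb F_q$, $\epsilon\in\mathbb F_{q^2}$ with $\epsilon^2=\omega$, and write $z=z_1+\epsilon z_2$ ($z_i\in\mathbb F_q$) for $z\in\mathbb F_{q^2}$. Let $\mathcal C: aX^2+bXY+cXZ+dYZ+eZ^2=0$ be a non-singular conic of $\mathrm{PG}(2,q^2)$ with $d=1$, $b\notin\mathbb F_q$, and $-bcd+ad^2+b^2e$ a nonzero square in $\mathbb F_{q^2}$. Put $A=-a_2b_1+a_1b_2$, $B=b_2c_1-b_1c_2-a_2d_1+a_1d_2$, $C=-c_2d_1+c_1d_2+b_2e_1-b_1e_2$, $D=d_2e_1-d_1e_2$, and let $\mathcal S\subset\mathrm{PG}(3,q)$ be the cubic surface in coordinates $(t_1:t_2:X:Z)$ with equation $$2t_1t_2(b_1X+d_1Z)-(t_1^2+\omega t_2^2)(b_2X+d_2Z)+AX^3+BX^2Z+CXZ^2+DZ^3=0.$$ Let $\mathcal S_q$ be the number of points of $\mathrm{PG}(3,q)$ on $\mathcal S$, and $n_0$, $n_\infty$ the numbers of those with $t_1=t_2=0$ and with $X=Z=0$ respectively. Then $E_q(\mathcal C)=\frac12(\mathcal S_q-n_0-n_\infty)$.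
   Context: $E_q(\mathcal C)$ is the number of points of $\mathrm{PG}(2,q)$ (canonically embedded in $\mathrm{PG}(2,q^2)$) which are external to $\mathcal C$, i.e. lie on two tangent lines of $\mathcal C$. *)

theory Defs
  imports Complex_Main "HOL-Computational_Algebra.Primes"
begin

text \<open>The big field is a finite field type 'a with CARD('a) = q^2; the subfield
F_q is the set of fixed points of the Frobenius x \<mapsto> x^q.\<close>

definition subfield_q :: "nat \<Rightarrow> ('a::field) set" where
  "subfield_q q = {x. x ^ q = x}"

definition comp1 :: "nat \<Rightarrow> 'a::field \<Rightarrow> 'a \<Rightarrow> 'a" where
  "comp1 q eps z = (THE z1. z1 \<in> subfield_q q \<and> (\<exists>z2 \<in> subfield_q q. z = z1 + eps * z2))"

definition comp2 :: "nat \<Rightarrow> 'a::field \<Rightarrow> 'a \<Rightarrow> 'a" where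
  "comp2 q eps z = (THE z2. z2 \<in> subfield_q q \<and> (\<exists>z1 \<in> subfield_q q. z = z1 + eps * z2))"

definition pclass3 :: "('a::field) set \<Rightarrow> 'a \<times> 'a \<times> 'a \<Rightarrow> ('a \<times> 'a \<times> 'a) set" where
  "pclass3 K v = (\<lambda>k. (k * fst v, k * fst (snd v), k * snd (snd v))) ` (K - {0})"

definition proj_plane :: "('a::field) set \<Rightarrow> ('a \<times> 'a \<times> 'a) set set" where
  "proj_plane K = {pclass3 K v | v. v \<in> K \<times> K \<times> K \<and> v \<noteq> (0, 0, 0)}"

definition pclass4 :: "('a::field) set \<Rightarrow> 'a \<times> 'a \<times> 'a \<times> 'a \<Rightarrow> ('a \<times> 'a \<times> 'a \<times> 'a) set" where
  "pclass4 K v = (\<lambda>k. (k * fst v, k * fst (snd v), k * fst (snd (snd v)), k * snd (snd (snd v)))) ` (K - {0})"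

definition proj_space3 :: "('a::field) set \<Rightarrow> ('a \<times> 'a \<times> 'a \<times> 'a) set set" where
  "proj_space3 K = {pclass4 K v | v. v \<in> K \<times> K \<times> K \<times> K \<and> v \<noteq> (0, 0, 0, 0)}"

text \<open>Lines of PG(2,F) are represented by their (dual) coordinate classes;
a point P lies on line L iff u1 x + u2 y + u3 z = 0.\<close>
definition incident :: "('a::field \<times> 'a \<times> 'a) set \<Rightarrow> ('a \<times> 'a \<times> 'a) set \<Rightarrow> bool" where
  "incident P L = (\<forall>v\<in>P. \<forall>u\<in>L. fst u * fst v + fst (snd u) * fst (snd v) + snd (snd u) * snd (snd v) = 0)"

definition conic_form :: "'a::field \<Rightarrow> 'a \<Rightarrow> 'a \<Rightarrow> 'a \<Rightarrow> 'a \<Rightarrow> 'a \<times> 'a \<times> 'a \<Rightarrow> 'a" where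
  "conic_form a b c d e v = (case v of (X, Y, Z) \<Rightarrow>
     a * X^2 + b * X * Y + c * X * Z + d * Y * Z + e * Z^2)"

text \<open>Non-singular: the Gram matrix [[2a,b,c],[b,0,d],[c,d,2e]] of the associated
bilinear form has nonzero determinant (odd characteristic).\<close>
definition conic_nonsingular :: "'a::field \<Rightarrow> 'a \<Rightarrow> 'a \<Rightarrow> 'a \<Rightarrow> 'a \<Rightarrow> bool" where
  "conic_nonsingular a b c d e =
     ((2*a) * (0 * (2*e) - d * d) - b * (b * (2*e) - d * c) + c * (b * d - 0 * c) \<noteq> 0)"

definition conic_points :: "'a::field \<Rightarrow> 'a \<Rightarrow> 'a \<Rightarrow> 'a \<Rightarrow> 'a \<Rightarrow> ('a \<times> 'a \<times> 'a) set set" where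
  "conic_points a b c d e = {P \<in> proj_plane UNIV. \<forall>v\<in>P. conic_form a b c d e v = 0}"

definition tangent_line :: "'a::field \<Rightarrow> 'a \<Rightarrow> 'a \<Rightarrow> 'a \<Rightarrow> 'a \<Rightarrow> ('a \<times> 'a \<times> 'a) set \<Rightarrow> bool" where
  "tangent_line a b c d e L = (L \<in> proj_plane UNIV \<and>
     card {P \<in> conic_points a b c d e. incident P L} = 1)"

definition E_q :: "nat \<Rightarrow> 'a::field \<Rightarrow> 'a \<Rightarrow> 'a \<Rightarrow> 'a \<Rightarrow> 'a \<Rightarrow> nat" where
  "E_q q a b c d e = card {P \<in> proj_plane (UNIV::'a set).
      (\<exists>v\<in>P. v \<in> subfield_q q \<times> subfield_q q \<times> subfield_q q) \<and>
      card {L. tangent_line a b c d e L \<and> incident P L} = 2}"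

definition surface_poly :: "nat \<Rightarrow> 'a::field \<Rightarrow> 'a \<Rightarrow> 'a \<Rightarrow> 'a \<Rightarrow> 'a \<Rightarrow> 'a \<Rightarrow> 'a \<Rightarrow>
    'a \<times> 'a \<times> 'a \<times> 'a \<Rightarrow> 'a" where
  "surface_poly q eps \<omega> a b c d e v = (case v of (t1, t2, X, Z) \<Rightarrow>
     (let a1 = comp1 q eps a; a2 = comp2 q eps a;
          b1 = comp1 q eps b; b2 = comp2 q eps b;
          c1 = comp1 q eps c; c2 = comp2 q eps c;
          d1 = comp1 q eps d; d2 = comp2 q eps d;
          e1 = comp1 q eps e; e2 = comp2 q eps e;
          A = - a2 * b1 + a1 * b2;
          B = b2 * c1 - b1 * c2 - a2 * d1 + a1 * d2;
          C = - c2 * d1 + c1 * d2 + b2 * e1 - b1 * e2;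
          D = d2 * e1 - d1 * e2
      in 2 * t1 * t2 * (b1 * X + d1 * Z) - (t1^2 + \<omega> * t2^2) * (b2 * X + d2 * Z)
         + A * X^3 + B * X^2 * Z + C * X * Z^2 + D * Z^3))"

definition surface_points :: "nat \<Rightarrow> 'a::field \<Rightarrow> 'a \<Rightarrow> 'a \<Rightarrow> 'a \<Rightarrow> 'a \<Rightarrow> 'a \<Rightarrow> 'a \<Rightarrow>
    ('a \<times> 'a \<times> 'a \<times> 'a) set set" where
  "surface_points q eps \<omega> a b c d e =
     {P \<in> proj_space3 (subfield_q q). \<forall>v\<in>P. surface_poly q eps \<omega> a b c d e v = 0}"

end

theory Submission
  imports Defs "HOL-Computational_Algebra.Primes"
begin

lemma of_nat_card_0: "of_nat (card (UNIV::'a::{finite,comm_ring_1} set)) = (0::'a)"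
proof -
  have "(\<Sum>y\<in>(UNIV::'a set). y + 1) = (\<Sum>y\<in>(UNIV::'a set). y)"
    by (rule sum.reindex_bij_witness[where i="\<lambda>b. b - 1" and j="\<lambda>a. a + 1"]) auto
  thus ?thesis by (simp add: sum.distrib)
qed

lemma pow_card_same: "(x::'a::{finite,field}) ^ card (UNIV :: 'a set) = x"
proof (cases "x = 0")
  case False
  have "x * (\<Prod>y\<in>UNIV-{0}. x * y) = x * x ^ (card (UNIV :: 'a set) - 1) * \<Prod>(UNIV-{0})"
    by (simp add: prod.distrib mult_ac)
  also have "x * x ^ (card (UNIV :: 'a set) - 1) = x ^ Suc (card (UNIV :: 'a set) - 1)"
    by (subst power_Suc) auto
  also have "Suc (card (UNIV :: 'a set) - 1) = card (UNIV :: 'a set)"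
    using finite_UNIV_card_ge_0[where ?'a = 'a] by simp
  also have "(\<Prod>y\<in>UNIV-{0}. x * y) = (\<Prod>y\<in>UNIV-{0}. y)"
    by (rule prod.reindex_bij_witness[of _ "\<lambda>y. y / x" "\<lambda>y. x * y"]) (use False in auto)
  finally show ?thesis
    by simp
qed (use finite_UNIV_card_ge_0[where ?'a = 'a] in auto)

locale fq =
  fixes q :: nat and \<omega> eps :: "'a::{finite,field}"
  assumes q_pp: "\<exists>p k. prime p \<and> k > 0 \<and> q = p ^ k"
    and q_odd: "odd q"
    and card: "card (UNIV::'a set) = q ^ 2"
    and \<omega>_in: "\<omega> \<in> subfield_q q"
    and \<omega>_nonsq: "\<not> (\<exists>y \<in> subfield_q q. y ^ 2 = \<omega>)"
    and eps: "eps ^ 2 = \<omega>"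
begin

abbreviation Fq :: "'a set" where "Fq \<equiv> subfield_q q"

lemma q_pos: "q > 0" using q_odd by (cases q) auto

lemma CHAR_q: "\<exists>k>0. q = CHAR('a) ^ k"
proof -
  obtain p k where pk: "prime p" "k > 0" "q = p ^ k" using q_pp by blast
  have pos: "CHAR('a) > 0" by (rule finite_imp_CHAR_pos) simp
  have pr: "prime CHAR('a)" by (rule prime_CHAR_semidom[OF pos])
  have "CHAR('a) dvd card (UNIV::'a set)" using of_nat_card_0[where 'a='a] of_nat_eq_0_iff_char_dvd by blast
  hence "CHAR('a) dvd p ^ (2*k)" using card pk by (simp add: power_mult mult.commute)
  hence "CHAR('a) dvd p" using pr prime_dvd_power by blast
  hence "CHAR('a) = p" using pr pk(1) primes_dvd_imp_eq by blast
  thus ?thesis using pk by blast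
qed

lemma prime_CHAR: "prime CHAR('a)"
proof -
  have pos: "CHAR('a) > 0" by (rule finite_imp_CHAR_pos) simp
  show ?thesis by (rule prime_CHAR_semidom[OF pos])
qed

lemma frob_add: "(x + y) ^ q = x ^ q + (y::'a) ^ q"
  using CHAR_q prime_CHAR freshmans_dream' by blast

lemma frob_neg: "(- x) ^ q = - ((x::'a) ^ q)"
  using q_odd by (simp add: power_minus_odd)

lemma frob_diff: "(x - y) ^ q = x ^ q - (y::'a) ^ q"
  using frob_add[of x "-y"] frob_neg[of y] by simp

lemma two_ne0: "(2::'a) \<noteq> 0"
proof
  assume "(2::'a) = 0"
  hence "of_nat 2 = (0::'a)" by simp
  hence d: "CHAR('a) dvd 2" using of_nat_eq_0_iff_char_dvd by blast
  hence "CHAR('a) = 2" using prime_CHAR two_is_prime_nat primes_dvd_imp_eq by blast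
  then obtain k where "q = 2 ^ k" "k > 0" using CHAR_q by auto
  thus False using q_odd by simp
qed

lemma four_ne0: "(4::'a) \<noteq> 0"
proof -
  have "(4::'a) = 2 * 2" by simp
  thus ?thesis using two_ne0 by (metis mult_eq_0_iff)
qed

lemma Fq_iff: "x \<in> Fq \<longleftrightarrow> x ^ q = x" by (simp add: subfield_q_def)

lemma Fq_0[simp]: "0 \<in> Fq" using q_pos by (simp add: Fq_iff)
lemma Fq_1[simp]: "1 \<in> Fq" by (simp add: Fq_iff)
lemma Fq_add: "x \<in> Fq \<Longrightarrow> y \<in> Fq \<Longrightarrow> x + y \<in> Fq" by (simp add: Fq_iff frob_add)
lemma Fq_neg: "x \<in> Fq \<Longrightarrow> - x \<in> Fq" by (simp add: Fq_iff frob_neg)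
lemma Fq_diff: "x \<in> Fq \<Longrightarrow> y \<in> Fq \<Longrightarrow> x - y \<in> Fq" by (simp add: Fq_iff frob_diff)
lemma Fq_mult: "x \<in> Fq \<Longrightarrow> y \<in> Fq \<Longrightarrow> x * y \<in> Fq" by (simp add: Fq_iff power_mult_distrib)
lemma Fq_inverse: "x \<in> Fq \<Longrightarrow> inverse x \<in> Fq" by (simp add: Fq_iff power_inverse)
lemma Fq_divide: "x \<in> Fq \<Longrightarrow> y \<in> Fq \<Longrightarrow> x / y \<in> Fq" by (simp add: divide_inverse Fq_mult Fq_inverse)
lemma Fq_power: "x \<in> Fq \<Longrightarrow> x ^ m \<in> Fq" by (induction m) (auto simp: Fq_mult)
lemma Fq_2[simp]: "2 \<in> Fq" using Fq_add[OF Fq_1 Fq_1] by (simp add: one_add_one)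
lemma Fq_4[simp]: "4 \<in> Fq" using Fq_mult[OF Fq_2 Fq_2] by simp
lemma Fq_8[simp]: "8 \<in> Fq" using Fq_mult[OF Fq_2 Fq_4] by simp

lemma pow_q2: "((x::'a) ^ q) ^ q = x"
  by (metis card pow_card_same power_mult power2_eq_square)

lemma eps_notin: "eps \<notin> Fq" using \<omega>_nonsq eps by blast
lemma eps_ne0: "eps \<noteq> 0" using eps_notin by auto

lemma eps_q: "eps ^ q = - eps"
proof -
  have "(eps ^ q)^2 = eps^2"
    by (metis \<omega>_in Fq_iff eps power_mult mult.commute)
  hence "eps ^ q = eps \<or> eps ^ q = - eps" by (simp add: power2_eq_iff)
  thus ?thesis using eps_notin Fq_iff by blast
qed

lemma decomp: "\<exists>z1\<in>Fq. \<exists>z2\<in>Fq. z = z1 + eps * z2"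
proof -
  let ?z1 = "(z + z^q)/2" and ?z2 = "(z - z^q)/(2*eps)"
  have two2: "(2::'a)^q = 2" using Fq_2 Fq_iff by blast
  have "?z1 ^ q = (z^q + z)/2" by (simp add: power_divide frob_add two2 pow_q2)
  hence "?z1 \<in> Fq" by (simp add: Fq_iff add.commute)
  moreover have "?z2 ^ q = (z^q - z)/(2*(-eps))"
    by (simp add: power_divide frob_diff power_mult_distrib two2 eps_q pow_q2)
  hence "?z2 \<in> Fq" by (simp add: Fq_iff) (simp add: divide_simps)
  moreover have "z = ?z1 + eps * ?z2" using eps_ne0 two_ne0 four_ne0 by (simp add: field_simps)
  ultimately show ?thesis by blast
qed

lemma decomp_unique:
  assumes "z1 \<in> Fq" "z2 \<in> Fq" "w1 \<in> Fq" "w2 \<in> Fq" "z1 + eps * z2 = w1 + eps * w2"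
  shows "z1 = w1 \<and> z2 = w2"
proof (cases "z2 = w2")
  case True thus ?thesis using assms by simp
next
  case False
  hence "eps = (z1 - w1)/(w2 - z2)" using assms(5) by (simp add: field_simps)
  hence "eps \<in> Fq" using assms by (simp add: Fq_divide Fq_diff)
  thus ?thesis using eps_notin by blast
qed

lemma comp1_eq: assumes "z1 \<in> Fq" "z2 \<in> Fq" shows "comp1 q eps (z1 + eps * z2) = z1"
  unfolding comp1_def
proof (rule the_equality)
  show "z1 \<in> Fq \<and> (\<exists>w2\<in>Fq. z1 + eps * z2 = z1 + eps * w2)" using assms by blast
  show "w1 \<in> Fq \<and> (\<exists>w2\<in>Fq. z1 + eps * z2 = w1 + eps * w2) \<Longrightarrow> w1 = z1" for w1
    using decomp_unique assms by metis
qed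

lemma comp2_eq: assumes "z1 \<in> Fq" "z2 \<in> Fq" shows "comp2 q eps (z1 + eps * z2) = z2"
  unfolding comp2_def
proof (rule the_equality)
  show "z2 \<in> Fq \<and> (\<exists>w1\<in>Fq. z1 + eps * z2 = w1 + eps * z2)" using assms by blast
  show "w2 \<in> Fq \<and> (\<exists>w1\<in>Fq. z1 + eps * z2 = w1 + eps * w2) \<Longrightarrow> w2 = z2" for w2
    using decomp_unique assms by metis
qed

lemma comp_props: "comp1 q eps z \<in> Fq" "comp2 q eps z \<in> Fq" "z = comp1 q eps z + eps * comp2 q eps z"
proof -
  obtain z1 z2 where zz: "z1 \<in> Fq" "z2 \<in> Fq" "z = z1 + eps * z2" using decomp by blast
  show "comp1 q eps z \<in> Fq" "comp2 q eps z \<in> Fq" "z = comp1 q eps z + eps * comp2 q eps z"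
    using zz comp1_eq comp2_eq by auto
qed

lemma Fq_comp2: "z \<in> Fq \<longleftrightarrow> comp2 q eps z = 0"
proof
  assume "z \<in> Fq" thus "comp2 q eps z = 0" using comp2_eq[of z 0] by simp
next
  assume "comp2 q eps z = 0" thus "z \<in> Fq" using comp_props[of z] by simp
qed

end

definition mclosed :: "'a::field set \<Rightarrow> bool" where
 "mclosed K \<longleftrightarrow> 1 \<in> K \<and> (\<forall>x\<in>K. \<forall>y\<in>K. x*y \<in> K) \<and> (\<forall>x\<in>K. inverse x \<in> K)"

lemma mclosed_UNIV: "mclosed UNIV" by (simp add: mclosed_def)

lemma pclass3_mem: "w \<in> pclass3 K v \<longleftrightarrow> (\<exists>k\<in>K-{0}. w = (k*fst v, k*fst(snd v), k*snd(snd v)))"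
  unfolding pclass3_def by auto

lemma pclass3_self: "mclosed K \<Longrightarrow> v \<in> pclass3 K v"
  unfolding pclass3_mem mclosed_def by (rule bexI[of _ 1]) auto

lemma pclass3_eq:
  assumes K: "mclosed K" and w: "w \<in> pclass3 K v" shows "pclass3 K w = pclass3 K v"
proof -
  obtain k where k: "k \<in> K" "k \<noteq> 0" "w = (k*fst v, k*fst(snd v), k*snd(snd v))" using w pclass3_mem by blast
  show ?thesis
  proof (rule set_eqI)
    fix x
    show "x \<in> pclass3 K w \<longleftrightarrow> x \<in> pclass3 K v"
    proof
      assume "x \<in> pclass3 K w"
      then obtain k' where k': "k' \<in> K" "k' \<noteq> 0" "x = (k'*fst w, k'*fst(snd w), k'*snd(snd w))" using pclass3_mem by blast
      have "k'*k \<in> K" "k'*k \<noteq> 0" using k k' K unfolding mclosed_def by auto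
      moreover have "x = ((k'*k)*fst v, (k'*k)*fst(snd v), (k'*k)*snd(snd v))" using k k' by (simp add: mult.assoc)
      ultimately show "x \<in> pclass3 K v" using pclass3_mem by blast
    next
      assume "x \<in> pclass3 K v"
      then obtain k' where k': "k' \<in> K" "k' \<noteq> 0" "x = (k'*fst v, k'*fst(snd v), k'*snd(snd v))" using pclass3_mem by blast
      have "k' * inverse k \<in> K" "k' * inverse k \<noteq> 0" using k k' K unfolding mclosed_def by auto
      moreover have "x = ((k' * inverse k)*fst w, (k' * inverse k)*fst(snd w), (k' * inverse k)*snd(snd w))"
        using k k' by (simp add: field_simps)
      ultimately show "x \<in> pclass3 K w" using pclass3_mem by blast
    qed
  qed
qed

lemma pclass3_card:
  assumes "v \<noteq> (0,0,0)" shows "card (pclass3 K v) = card (K - {0})"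
  unfolding pclass3_def
proof (rule card_image, rule inj_onI)
  fix k k' assume "(k * fst v, k * fst (snd v), k * snd (snd v)) = (k' * fst v, k' * fst (snd v), k' * snd (snd v))"
  thus "k = k'" using assms by (cases v) auto
qed

lemma pclass3_sub:
  assumes K: "mclosed K" and v: "v \<in> K\<times>K\<times>K" "v \<noteq> (0,0,0)" and w: "w \<in> pclass3 K v"
  shows "w \<in> K\<times>K\<times>K \<and> w \<noteq> (0,0,0)"
proof -
  obtain k where k: "k \<in> K" "k \<noteq> 0" "w = (k*fst v, k*fst(snd v), k*snd(snd v))" using w pclass3_mem by blast
  thus ?thesis using K v unfolding mclosed_def by (cases v) auto
qed

lemma count3:
  fixes K :: "'a::{finite,field} set" and \<psi> :: "'a\<times>'a\<times>'a \<Rightarrow> bool"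
  assumes K: "mclosed K"
  shows "card (K - {0}) * card {P \<in> proj_plane K. \<forall>v\<in>P. \<psi> v}
       = card {v \<in> K\<times>K\<times>K. v \<noteq> (0,0,0) \<and> (\<forall>w\<in>pclass3 K v. \<psi> w)}"
proof -
  let ?C = "{P \<in> proj_plane K. \<forall>v\<in>P. \<psi> v}"
  have U: "\<Union>?C = {v \<in> K\<times>K\<times>K. v \<noteq> (0,0,0) \<and> (\<forall>w\<in>pclass3 K v. \<psi> w)}"
  proof (rule set_eqI, rule iffI)
    fix x assume "x \<in> \<Union>?C"
    then obtain P where P: "P \<in> ?C" "x \<in> P" by blast
    then obtain v where v: "P = pclass3 K v" "v \<in> K\<times>K\<times>K" "v \<noteq> (0,0,0)" unfolding proj_plane_def by blast
    have "pclass3 K x = P" using pclass3_eq[OF K] P v by blast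
    thus "x \<in> {v \<in> K\<times>K\<times>K. v \<noteq> (0,0,0) \<and> (\<forall>w\<in>pclass3 K v. \<psi> w)}"
      using pclass3_sub[OF K v(2,3)] P v by auto
  next
    fix x assume x: "x \<in> {v \<in> K\<times>K\<times>K. v \<noteq> (0,0,0) \<and> (\<forall>w\<in>pclass3 K v. \<psi> w)}"
    hence "pclass3 K x \<in> ?C" unfolding proj_plane_def by blast
    thus "x \<in> \<Union>?C" using pclass3_self[OF K] by blast
  qed
  have "card (K - {0}) * card ?C = card (\<Union>?C)"
  proof (rule card_partition)
    show "finite ?C" by (rule finite_subset[of _ UNIV]) auto
    show "finite (\<Union>?C)" by simp
    show "card c = card (K - {0})" if cC: "c \<in> ?C" for c
    proof -
      obtain v where "c = pclass3 K v" "v \<noteq> (0,0,0)" using cC unfolding proj_plane_def by blast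
      thus ?thesis using pclass3_card by blast
    qed
    show "c1 \<inter> c2 = {}" if c: "c1 \<in> ?C" "c2 \<in> ?C" "c1 \<noteq> c2" for c1 c2
    proof -
      show "c1 \<inter> c2 = {}"
      proof (rule ccontr)
        assume "c1 \<inter> c2 \<noteq> {}"
        then obtain x where x: "x \<in> c1" "x \<in> c2" by blast
        obtain v1 where "c1 = pclass3 K v1" using c unfolding proj_plane_def by blast
        hence "pclass3 K x = c1" using pclass3_eq[OF K] x by blast
        moreover obtain v2 where "c2 = pclass3 K v2" using c unfolding proj_plane_def by blast
        hence "pclass3 K x = c2" using pclass3_eq[OF K] x by blast
        ultimately show False using c by simp
      qed
    qed
  qed
  thus ?thesis using U by simp
qed

lemma pclass4_mem: "w \<in> pclass4 K v \<longleftrightarrow> (\<exists>k\<in>K-{0}. w = (k*fst v, k*fst(snd v), k*fst(snd(snd v)), k*snd(snd(snd v))))"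
  unfolding pclass4_def by auto

lemma pclass4_self: "mclosed K \<Longrightarrow> v \<in> pclass4 K v"
  unfolding pclass4_mem mclosed_def by (rule bexI[of _ 1]) auto

lemma pclass4_eq:
  assumes K: "mclosed K" and w: "w \<in> pclass4 K v" shows "pclass4 K w = pclass4 K v"
proof -
  obtain k where k: "k \<in> K" "k \<noteq> 0" "w = (k*fst v, k*fst(snd v), k*fst(snd(snd v)), k*snd(snd(snd v)))" using w pclass4_mem by blast
  show ?thesis
  proof (rule set_eqI)
    fix x
    show "x \<in> pclass4 K w \<longleftrightarrow> x \<in> pclass4 K v"
    proof
      assume "x \<in> pclass4 K w"
      then obtain k' where k': "k' \<in> K" "k' \<noteq> 0" "x = (k'*fst w, k'*fst(snd w), k'*fst(snd(snd w)), k'*snd(snd(snd w)))" using pclass4_mem by blast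
      have "k'*k \<in> K" "k'*k \<noteq> 0" using k k' K unfolding mclosed_def by auto
      moreover have "x = ((k'*k)*fst v, (k'*k)*fst(snd v), (k'*k)*fst(snd(snd v)), (k'*k)*snd(snd(snd v)))" using k k' by (simp add: mult.assoc)
      ultimately show "x \<in> pclass4 K v" using pclass4_mem by blast
    next
      assume "x \<in> pclass4 K v"
      then obtain k' where k': "k' \<in> K" "k' \<noteq> 0" "x = (k'*fst v, k'*fst(snd v), k'*fst(snd(snd v)), k'*snd(snd(snd v)))" using pclass4_mem by blast
      have "k' * inverse k \<in> K" "k' * inverse k \<noteq> 0" using k k' K unfolding mclosed_def by auto
      moreover have "x = ((k' * inverse k)*fst w, (k' * inverse k)*fst(snd w), (k' * inverse k)*fst(snd(snd w)), (k' * inverse k)*snd(snd(snd w)))"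
        using k k' by (simp add: field_simps)
      ultimately show "x \<in> pclass4 K w" using pclass4_mem by blast
    qed
  qed
qed

lemma pclass4_card:
  assumes "v \<noteq> (0,0,0,0)" shows "card (pclass4 K v) = card (K - {0})"
  unfolding pclass4_def
proof (rule card_image, rule inj_onI)
  fix k k' assume "(k * fst v, k * fst (snd v), k * fst (snd (snd v)), k * snd (snd (snd v))) = (k' * fst v, k' * fst (snd v), k' * fst (snd (snd v)), k' * snd (snd (snd v)))"
  thus "k = k'" using assms by (cases v) auto
qed

lemma pclass4_sub:
  assumes K: "mclosed K" and v: "v \<in> K\<times>K\<times>K\<times>K" "v \<noteq> (0,0,0,0)" and w: "w \<in> pclass4 K v"
  shows "w \<in> K\<times>K\<times>K\<times>K \<and> w \<noteq> (0,0,0,0)"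
proof -
  obtain k where k: "k \<in> K" "k \<noteq> 0" "w = (k*fst v, k*fst(snd v), k*fst(snd(snd v)), k*snd(snd(snd v)))" using w pclass4_mem by blast
  thus ?thesis using K v unfolding mclosed_def by (cases v) auto
qed

lemma count4:
  fixes K :: "'a::{finite,field} set" and \<psi> :: "'a\<times>'a\<times>'a\<times>'a \<Rightarrow> bool"
  assumes K: "mclosed K"
  shows "card (K - {0}) * card {P \<in> proj_space3 K. \<forall>v\<in>P. \<psi> v}
       = card {v \<in> K\<times>K\<times>K\<times>K. v \<noteq> (0,0,0,0) \<and> (\<forall>w\<in>pclass4 K v. \<psi> w)}"
proof -
  let ?C = "{P \<in> proj_space3 K. \<forall>v\<in>P. \<psi> v}"
  have U: "\<Union>?C = {v \<in> K\<times>K\<times>K\<times>K. v \<noteq> (0,0,0,0) \<and> (\<forall>w\<in>pclass4 K v. \<psi> w)}"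
  proof (rule set_eqI, rule iffI)
    fix x assume "x \<in> \<Union>?C"
    then obtain P where P: "P \<in> ?C" "x \<in> P" by blast
    then obtain v where v: "P = pclass4 K v" "v \<in> K\<times>K\<times>K\<times>K" "v \<noteq> (0,0,0,0)" unfolding proj_space3_def by blast
    have "pclass4 K x = P" using pclass4_eq[OF K] P v by blast
    thus "x \<in> {v \<in> K\<times>K\<times>K\<times>K. v \<noteq> (0,0,0,0) \<and> (\<forall>w\<in>pclass4 K v. \<psi> w)}"
      using pclass4_sub[OF K v(2,3)] P v by auto
  next
    fix x assume x: "x \<in> {v \<in> K\<times>K\<times>K\<times>K. v \<noteq> (0,0,0,0) \<and> (\<forall>w\<in>pclass4 K v. \<psi> w)}"
    hence "pclass4 K x \<in> ?C" unfolding proj_space3_def by blast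
    thus "x \<in> \<Union>?C" using pclass4_self[OF K] by blast
  qed
  have "card (K - {0}) * card ?C = card (\<Union>?C)"
  proof (rule card_partition)
    show "finite ?C" by (rule finite_subset[of _ UNIV]) auto
    show "finite (\<Union>?C)" by simp
    show "card c = card (K - {0})" if cC: "c \<in> ?C" for c
    proof -
      obtain v where "c = pclass4 K v" "v \<noteq> (0,0,0,0)" using cC unfolding proj_space3_def by blast
      thus ?thesis using pclass4_card by blast
    qed
    show "c1 \<inter> c2 = {}" if c: "c1 \<in> ?C" "c2 \<in> ?C" "c1 \<noteq> c2" for c1 c2
    proof -
      show "c1 \<inter> c2 = {}"
      proof (rule ccontr)
        assume "c1 \<inter> c2 \<noteq> {}"
        then obtain x where x: "x \<in> c1" "x \<in> c2" by blast
        obtain v1 where "c1 = pclass4 K v1" using c unfolding proj_space3_def by blast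
        hence "pclass4 K x = c1" using pclass4_eq[OF K] x by blast
        moreover obtain v2 where "c2 = pclass4 K v2" using c unfolding proj_space3_def by blast
        hence "pclass4 K x = c2" using pclass4_eq[OF K] x by blast
        ultimately show False using c by simp
      qed
    qed
  qed
  thus ?thesis using U by simp
qed

definition qf :: "'a::comm_ring_1 \<Rightarrow> 'a \<Rightarrow> 'a \<Rightarrow> 'a \<Rightarrow> 'a \<Rightarrow> 'a \<Rightarrow> 'a \<Rightarrow> 'a \<Rightarrow> 'a \<Rightarrow> 'a" where
 "qf A1 A2 A3 B12 B13 B23 x1 x2 x3 = A1*x1^2 + A2*x2^2 + A3*x3^2 + B12*x1*x2 + B13*x1*x3 + B23*x2*x3"
definition detM :: "'a::comm_ring_1 \<Rightarrow> 'a \<Rightarrow> 'a \<Rightarrow> 'a \<Rightarrow> 'a \<Rightarrow> 'a \<Rightarrow> 'a" where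
 "detM A1 A2 A3 B12 B13 B23 = 2*A1*(4*A2*A3 - B23^2) - B12*(2*B12*A3 - B23*B13) + B13*(B12*B23 - 2*A2*B13)"
definition Dl :: "'a::comm_ring_1 \<Rightarrow> 'a \<Rightarrow> 'a \<Rightarrow> 'a \<Rightarrow> 'a \<Rightarrow> 'a \<Rightarrow> 'a \<Rightarrow> 'a \<Rightarrow> 'a \<Rightarrow> 'a" where
 "Dl A1 A2 A3 B12 B13 B23 u1 u2 u3 = qf (B23^2 - 4*A2*A3) (B13^2 - 4*A1*A3) (B12^2 - 4*A1*A2)
     (2*(2*A3*B12 - B13*B23)) (2*(2*A2*B13 - B12*B23)) (2*(2*A1*B23 - B12*B13)) u1 u2 u3"
definition bl :: "'a::comm_ring_1 \<Rightarrow> 'a \<Rightarrow> 'a \<Rightarrow> 'a \<Rightarrow> 'a \<Rightarrow> 'a \<Rightarrow> 'a \<Rightarrow> 'a \<Rightarrow> 'a \<Rightarrow> 'a \<Rightarrow> 'a \<Rightarrow> 'a \<Rightarrow> 'a" where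
 "bl A1 A2 A3 B12 B13 B23 x1 x2 x3 y1 y2 y3 = 2*A1*x1*y1 + 2*A2*x2*y2 + 2*A3*x3*y3
    + B12*(x1*y2+x2*y1) + B13*(x1*y3+x3*y1) + B23*(x2*y3+x3*y2)"

definition dot :: "'a::comm_ring_1 \<times> 'a \<times> 'a \<Rightarrow> 'a \<times> 'a \<times> 'a \<Rightarrow> 'a" where
 "dot u x = fst u * fst x + fst (snd u) * fst (snd x) + snd (snd u) * snd (snd x)"

definition kk :: "'a::field \<Rightarrow> nat" where
 "kk D = (if D = 0 then 1 else if (\<exists>s. s^2 = D) then 2 else 0)"

lemma disc_c1: "(bl A1 A2 A3 B12 B13 B23 (-u2) u1 0 (-u3) 0 u1)^2 - 4*qf A1 A2 A3 B12 B13 B23 (-u2) u1 0 * qf A1 A2 A3 B12 B13 B23 (-u3) 0 u1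
   = u1^2 * Dl A1 A2 A3 B12 B13 B23 u1 u2 (u3::'a::comm_ring_1)"
  by (simp add: qf_def bl_def Dl_def algebra_simps power2_eq_square)
lemma disc_c2: "(bl A1 A2 A3 B12 B13 B23 u2 (-u1) 0 0 (-u3) u2)^2 - 4*qf A1 A2 A3 B12 B13 B23 u2 (-u1) 0 * qf A1 A2 A3 B12 B13 B23 0 (-u3) u2
   = u2^2 * Dl A1 A2 A3 B12 B13 B23 u1 u2 (u3::'a::comm_ring_1)"
  by (simp add: qf_def bl_def Dl_def algebra_simps power2_eq_square)
lemma disc_c3: "(bl A1 A2 A3 B12 B13 B23 u3 0 (-u1) 0 u3 (-u2))^2 - 4*qf A1 A2 A3 B12 B13 B23 u3 0 (-u1) * qf A1 A2 A3 B12 B13 B23 0 u3 (-u2)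
   = u3^2 * Dl A1 A2 A3 B12 B13 B23 u1 u2 (u3::'a::comm_ring_1)"
  by (simp add: qf_def bl_def Dl_def algebra_simps power2_eq_square)
lemma qphi_gen: "qf A1 A2 A3 B12 B13 B23 (s*w1+r*v1) (s*w2+r*v2) (s*w3+r*(v3::'a::comm_ring_1)) =
   qf A1 A2 A3 B12 B13 B23 w1 w2 w3 * s^2 + bl A1 A2 A3 B12 B13 B23 w1 w2 w3 v1 v2 v3 * s * r + qf A1 A2 A3 B12 B13 B23 v1 v2 v3 * r^2"
  by (simp add: qf_def bl_def algebra_simps power2_eq_square)
lemma nd_c1: "detM (qf A1 A2 A3 B12 B13 B23 (-u2) u1 0) (qf A1 A2 A3 B12 B13 B23 (-u3) 0 u1) A1
   (bl A1 A2 A3 B12 B13 B23 (-u2) u1 0 (-u3) 0 u1) (bl A1 A2 A3 B12 B13 B23 (-u2) u1 0 1 0 0)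
   (bl A1 A2 A3 B12 B13 B23 (-u3) 0 u1 1 0 0)
  = u1^4 * detM A1 A2 A3 B12 B13 (B23::'a::comm_ring_1)"
  unfolding qf_def detM_def bl_def by (simp add: algebra_simps power2_eq_square power4_eq_xxxx)
lemma nd_c2: "detM (qf A1 A2 A3 B12 B13 B23 u2 (-u1) 0) (qf A1 A2 A3 B12 B13 B23 0 (-u3) u2) A2
   (bl A1 A2 A3 B12 B13 B23 u2 (-u1) 0 0 (-u3) u2) (bl A1 A2 A3 B12 B13 B23 u2 (-u1) 0 0 1 0)
   (bl A1 A2 A3 B12 B13 B23 0 (-u3) u2 0 1 0)
  = u2^4 * detM A1 A2 A3 B12 B13 (B23::'a::comm_ring_1)"
  unfolding qf_def detM_def bl_def by (simp add: algebra_simps power2_eq_square power4_eq_xxxx)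
lemma nd_c3: "detM (qf A1 A2 A3 B12 B13 B23 u3 0 (-u1)) (qf A1 A2 A3 B12 B13 B23 0 u3 (-u2)) A3
   (bl A1 A2 A3 B12 B13 B23 u3 0 (-u1) 0 u3 (-u2)) (bl A1 A2 A3 B12 B13 B23 u3 0 (-u1) 0 0 1)
   (bl A1 A2 A3 B12 B13 B23 0 u3 (-u2) 0 0 1)
  = u3^4 * detM A1 A2 A3 B12 B13 (B23::'a::comm_ring_1)"
  unfolding qf_def detM_def bl_def by (simp add: algebra_simps power2_eq_square power4_eq_xxxx)

lemma solve_lin: assumes "c \<noteq> 0" "c*x + a*y + b*z = (0::'a::field)" shows "y/c*(-a) + z/c*(-b) = x"
proof -
  have "c*x = -(a*y+b*z)" using assms(2) by (metis eq_neg_iff_add_eq_0 add.assoc)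
  hence "x = -(a*y+b*z)/c" using assms(1) by (simp add: field_simps)
  thus ?thesis using assms(1) by (simp add: field_simps)
qed


lemma dd_gen: fixes A1 :: "'a::idom" shows
 "Dl (B23^2 - 4*A2*A3) (B13^2 - 4*A1*A3) (B12^2 - 4*A1*A2)
     (2*(2*A3*B12 - B13*B23)) (2*(2*A2*B13 - B12*B23)) (2*(2*A1*B23 - B12*B13)) x1 x2 x3
  = - 8 * detM A1 A2 A3 B12 B13 B23 * qf A1 A2 A3 B12 B13 B23 x1 x2 x3"
  unfolding qf_def Dl_def detM_def by algebra
lemma ddet_gen: fixes A1 :: "'a::idom" shows
 "detM (B23^2 - 4*A2*A3) (B13^2 - 4*A1*A3) (B12^2 - 4*A1*A2)
     (2*(2*A3*B12 - B13*B23)) (2*(2*A2*B13 - B12*B23)) (2*(2*A1*B23 - B12*B13))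
  = - 8 * (detM A1 A2 A3 B12 B13 B23)^2"
  unfolding detM_def by algebra
lemma qf_hom: "qf A1 A2 A3 B12 B13 B23 (k*x1) (k*x2) (k*x3) = k^2 * qf A1 A2 A3 B12 B13 B23 x1 x2 (x3::'a::comm_ring_1)"
  by (simp add: qf_def algebra_simps power2_eq_square)

lemma detM_zero: "detM 0 0 A 0 x y = (0::'a::comm_ring_1)"
  by (simp add: detM_def)

lemma kk_scale:
  fixes D c :: "'a::field" assumes c: "c \<noteq> 0" shows "kk (c^2 * D) = kk D"
proof -
  have "(\<exists>s. s^2 = c^2 * D) \<longleftrightarrow> (\<exists>s. s^2 = D)"
  proof
    assume "\<exists>s. s^2 = c^2 * D" then obtain s where "s^2 = c^2*D" by blast
    hence "(s/c)^2 = D" using c by (simp add: power_divide)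
    thus "\<exists>s. s^2 = D" by blast
  next
    assume "\<exists>s. s^2 = D" then obtain s where "s^2 = D" by blast
    hence "(c*s)^2 = c^2*D" by (simp add: power_mult_distrib)
    thus "\<exists>s. s^2 = c^2 * D" by blast
  qed
  thus ?thesis using c unfolding kk_def by simp
qed

lemma sq_card:
  fixes D :: "'a::{finite,field}" assumes two: "(2::'a) \<noteq> 0"
  shows "card {s. s^2 = D} = kk D"
proof (cases "D = 0")
  case True
  hence "{s. s^2 = D} = {0}" by auto
  thus ?thesis using True by (simp add: kk_def)
next
  case False
  show ?thesis
  proof (cases "\<exists>s. s^2 = D")
    case True
    then obtain s0 where s0: "s0^2 = D" by blast
    have "s0 \<noteq> 0" using s0 False by auto
    have "s0 \<noteq> -s0"
    proof
      assume "s0 = -s0" hence "2 * s0 = 0" by simp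
      thus False using two \<open>s0 \<noteq> 0\<close> by simp
    qed
    have "{s. s^2 = D} = {s0, -s0}" using s0 by (auto simp: power2_eq_iff)
    thus ?thesis using True False \<open>s0 \<noteq> -s0\<close> by (simp add: kk_def)
  next
    case nosq: False
    hence "{s. s^2 = D} = {}" by auto
    thus ?thesis using nosq False by (simp add: kk_def)
  qed
qed

lemma quad_card:
  fixes al be ga :: "'a::{finite,field}" assumes two: "(2::'a) \<noteq> 0" and al: "al \<noteq> 0"
  shows "card {l. al*l^2 + be*l + ga = 0} = kk (be^2 - 4*al*ga)"
proof -
  have key: "(2*al*l+be)^2 = 4*al*(al*l^2 + be*l + ga) + (be^2 - 4*al*ga)" for l
    by (simp add: algebra_simps power2_eq_square)
  have two_al: "2*al \<noteq> 0" using two al by simp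
  have "bij_betw (\<lambda>l. 2*al*l+be) {l. al*l^2 + be*l + ga = 0} {s. s^2 = be^2 - 4*al*ga}"
  proof (rule bij_betw_byWitness[where f'="\<lambda>s. (s - be)/(2*al)"])
    show "\<forall>a\<in>{l. al*l^2 + be*l + ga = 0}. (2*al*a+be - be)/(2*al) = a" using two_al by auto
    show "\<forall>a'\<in>{s. s^2 = be^2 - 4*al*ga}. 2*al*((a' - be)/(2*al)) + be = a'" using two_al by auto
    show "(\<lambda>l. 2*al*l+be) ` {l. al*l^2 + be*l + ga = 0} \<subseteq> {s. s^2 = be^2 - 4*al*ga}"
      using key by auto
    show "(\<lambda>s. (s - be)/(2*al)) ` {s. s^2 = be^2 - 4*al*ga} \<subseteq> {l. al*l^2 + be*l + ga = 0}"
    proof clarify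
      fix s assume s: "s^2 = be^2 - 4*al*ga"
      let ?l = "(s - be)/(2*al)"
      have "2*al*?l + be = s" using two_al by simp
      hence "4*al*(al*?l^2 + be*?l + ga) = 0" using key[of ?l] s by simp
      moreover have "(4::'a) \<noteq> 0" using two by (metis mult_2_right mult_eq_0_iff numeral_Bit0 one_plus_numeral semiring_norm(2))
      ultimately show "al*?l^2 + be*?l + ga = 0" using al by simp
    qed
  qed
  hence "card {l. al*l^2 + be*l + ga = 0} = card {s. s^2 = be^2 - 4*al*ga}"
    by (rule bij_betw_same_card)
  thus ?thesis using sq_card[OF two] by simp
qed

lemma bin_card1:
  fixes al be ga :: "'a::{finite,field}" assumes two: "(2::'a) \<noteq> 0" and al: "al \<noteq> 0"
  shows "card {(s,r). (s,r) \<noteq> (0,0) \<and> al*s^2+be*s*r+ga*r^2 = 0} = (card (UNIV::'a set) - 1) * kk (be^2 - 4*al*ga)"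
proof -
  let ?R = "{l. al*l^2 + be*l + ga = 0}"
  have eq: "{(s,r). (s,r) \<noteq> (0,0) \<and> al*s^2+be*s*r+ga*r^2 = 0} = (\<lambda>(l,r). (l*r, r)) ` (?R \<times> (UNIV - {0}))"
  proof (rule set_eqI, rule iffI)
    fix x assume "x \<in> {(s,r). (s,r) \<noteq> (0,0) \<and> al*s^2+be*s*r+ga*r^2 = 0}"
    then obtain s r where x: "x = (s,r)" "(s,r) \<noteq> (0,0)" "al*s^2+be*s*r+ga*r^2 = 0" by auto
    have r: "r \<noteq> 0"
    proof
      assume "r = 0" hence "al*s^2 = 0" using x by simp
      hence "s = 0" using al by simp
      thus False using x \<open>r = 0\<close> by simp
    qed
    have "al*(s/r)^2 + be*(s/r) + ga = (al*s^2+be*s*r+ga*r^2)/r^2"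
      using r by (simp add: field_simps power2_eq_square)
    hence "s/r \<in> ?R" using x by simp
    moreover have "x = (\<lambda>(l,r). (l*r, r)) (s/r, r)" using x r by simp
    ultimately show "x \<in> (\<lambda>(l,r). (l*r, r)) ` (?R \<times> (UNIV - {0}))" using r by blast
  next
    fix x assume "x \<in> (\<lambda>(l,r). (l*r, r)) ` (?R \<times> (UNIV - {0}))"
    then obtain l r where x: "x = (l*r, r)" "l \<in> ?R" "r \<noteq> 0" by auto
    have "al*(l*r)^2+be*(l*r)*r+ga*r^2 = r^2 * (al*l^2 + be*l + ga)"
      by (simp add: algebra_simps power2_eq_square)
    thus "x \<in> {(s,r). (s,r) \<noteq> (0,0) \<and> al*s^2+be*s*r+ga*r^2 = 0}" using x by simp
  qed
  have inj: "inj_on (\<lambda>(l,r). (l*r, r)) (?R \<times> (UNIV - {0}))"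
    by (rule inj_onI) auto
  have "card (UNIV - {0::'a}) = card (UNIV::'a set) - 1" by (simp add: card_Diff_subset)
  hence "card {(s,r). (s,r) \<noteq> (0,0) \<and> al*s^2+be*s*r+ga*r^2 = 0} = card ?R * (card (UNIV::'a set) - 1)"
    unfolding eq using card_image[OF inj] by (simp add: card_cartesian_product)
  thus ?thesis using quad_card[OF two al] by simp
qed

lemma bin_card:
  fixes al be ga :: "'a::{finite,field}" assumes two: "(2::'a) \<noteq> 0" and nz: "\<not> (al = 0 \<and> be = 0 \<and> ga = 0)"
  shows "card {(s,r). (s,r) \<noteq> (0,0) \<and> al*s^2+be*s*r+ga*r^2 = 0} = (card (UNIV::'a set) - 1) * kk (be^2 - 4*al*ga)"
proof (cases "al = 0")
  case False thus ?thesis using bin_card1[OF two] by blast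
next
  case al0: True
  show ?thesis
  proof (cases "ga = 0")
    case False
    have eq: "{(s,r). (s,r) \<noteq> (0,0) \<and> al*s^2+be*s*r+ga*r^2 = 0} =
       prod.swap ` {(s,r). (s,r) \<noteq> (0,0) \<and> ga*s^2+be*s*r+al*r^2 = 0}"
      by (auto simp: image_def algebra_simps)
    have "card {(s,r). (s,r) \<noteq> (0,0) \<and> al*s^2+be*s*r+ga*r^2 = 0} =
        card {(s,r). (s,r) \<noteq> (0,0) \<and> ga*s^2+be*s*r+al*r^2 = 0}"
      unfolding eq by (rule card_image) (simp add: inj_on_def)
    also have "\<dots> = (card (UNIV::'a set) - 1) * kk (be^2 - 4*ga*al)" using bin_card1[OF two False] by blast
    also have "be^2 - 4*ga*al = be^2 - 4*al*ga" by (simp add: algebra_simps)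
    finally show ?thesis .
  next
    case ga0: True
    hence be: "be \<noteq> 0" using nz al0 by simp
    have eq: "{(s,r). (s,r) \<noteq> (0,0) \<and> al*s^2+be*s*r+ga*r^2 = 0} =
       (\<lambda>s. (s,0)) ` (UNIV - {0}) \<union> (\<lambda>r. (0,r)) ` (UNIV - {0})"
      using al0 ga0 be by auto
    have c1: "card ((\<lambda>s. (s,0::'a)) ` (UNIV - {0::'a})) = card (UNIV::'a set) - 1"
      by (subst card_image) (auto simp: inj_on_def card_Diff_subset)
    have c2: "card ((\<lambda>r. (0::'a,r)) ` (UNIV - {0::'a})) = card (UNIV::'a set) - 1"
      by (subst card_image) (auto simp: inj_on_def card_Diff_subset)
    have "card {(s,r). (s,r) \<noteq> (0,0) \<and> al*s^2+be*s*r+ga*r^2 = 0} = 2 * (card (UNIV::'a set) - 1)"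
      unfolding eq by (subst card_Un_disjoint) (auto simp: c1 c2)
    moreover have "kk (be^2 - 4*al*ga) = 2" using al0 ga0 be by (auto simp: kk_def)
    ultimately show ?thesis by simp
  qed
qed


locale tqf =
  fixes A1 A2 A3 B12 B13 B23 :: "'a::{finite,field}"
  assumes two: "(2::'a) \<noteq> 0" and nd: "detM A1 A2 A3 B12 B13 B23 \<noteq> 0"
begin

definition Q :: "'a \<times> 'a \<times> 'a \<Rightarrow> 'a" where
  "Q x = qf A1 A2 A3 B12 B13 B23 (fst x) (fst (snd x)) (snd (snd x))"
definition Dv :: "'a \<times> 'a \<times> 'a \<Rightarrow> 'a" where
  "Dv u = Dl A1 A2 A3 B12 B13 B23 (fst u) (fst (snd u)) (snd (snd u))"

lemma LC_param:
  assumes bij: "bij_betw \<phi> {p. p \<noteq> (0,0)} {x. x \<noteq> (0,0,0) \<and> dot u x = 0}"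
  and qphi: "\<And>s r. Q (\<phi> (s,r)) = al*s^2 + be*s*r + ga*r^2"
  and disc: "be^2 - 4*al*ga = c^2 * Dv u" and c: "c \<noteq> 0" and ndg: "\<not>(al=0 \<and> be=0 \<and> ga=0)"
  shows "card {x. x \<noteq> (0,0,0) \<and> dot u x = 0 \<and> Q x = 0} = (card (UNIV::'a set) - 1) * kk (Dv u)"
proof -
  let ?T = "{(s,r). (s,r) \<noteq> (0,0) \<and> al*s^2+be*s*r+ga*r^2 = 0}"
  have eq: "{x. x \<noteq> (0,0,0) \<and> dot u x = 0 \<and> Q x = 0} = \<phi> ` ?T"
  proof (rule set_eqI, rule iffI)
    fix x assume x: "x \<in> {x. x \<noteq> (0,0,0) \<and> dot u x = 0 \<and> Q x = 0}"
    have "x \<in> \<phi> ` {p. p \<noteq> (0,0)}" using bij x unfolding bij_betw_def by auto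
    then obtain p where p: "p \<noteq> (0,0)" "x = \<phi> p" by blast
    obtain s r where "p = (s,r)" by fastforce
    thus "x \<in> \<phi> ` ?T" using p x qphi[of s r] by auto
  next
    fix x assume "x \<in> \<phi> ` ?T"
    then obtain s r where sr: "(s,r) \<noteq> (0,0)" "al*s^2+be*s*r+ga*r^2 = 0" "x = \<phi> (s,r)" by auto
    have "x \<in> {x. x \<noteq> (0,0,0) \<and> dot u x = 0}" using bij sr unfolding bij_betw_def by auto
    thus "x \<in> {x. x \<noteq> (0,0,0) \<and> dot u x = 0 \<and> Q x = 0}" using sr qphi[of s r] by auto
  qed
  have inj0: "inj_on \<phi> {p. p \<noteq> (0,0)}" using bij by (simp add: bij_betw_def)
  have inj: "inj_on \<phi> ?T" by (rule inj_on_subset[OF inj0]) auto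
  have "card {x. x \<noteq> (0,0,0) \<and> dot u x = 0 \<and> Q x = 0} = card ?T" unfolding eq by (rule card_image[OF inj])
  also have "\<dots> = (card (UNIV::'a set) - 1) * kk (be^2 - 4*al*ga)" by (rule bin_card[OF two ndg])
  also have "kk (be^2 - 4*al*ga) = kk (Dv u)" using disc kk_scale[OF c] by simp
  finally show ?thesis .
qed

lemma LC_wv:
  assumes bij: "bij_betw (\<lambda>(s,r). (s*wa+r*va, s*wb+r*vb, s*wc+r*vc)) {p. p \<noteq> (0,0)} {x. x \<noteq> (0,0,0) \<and> dot u x = 0}"
  and disc: "(bl A1 A2 A3 B12 B13 B23 wa wb wc va vb vc)^2 - 4*qf A1 A2 A3 B12 B13 B23 wa wb wc * qf A1 A2 A3 B12 B13 B23 va vb vc = c^2 * Dv u"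
  and c: "c \<noteq> 0"
  and ndg: "\<not>(qf A1 A2 A3 B12 B13 B23 wa wb wc = 0 \<and> bl A1 A2 A3 B12 B13 B23 wa wb wc va vb vc = 0 \<and> qf A1 A2 A3 B12 B13 B23 va vb vc = 0)"
  shows "card {x. x \<noteq> (0,0,0) \<and> dot u x = 0 \<and> Q x = 0} = (card (UNIV::'a set) - 1) * kk (Dv u)"
proof (rule LC_param[OF bij _ disc c ndg])
  show "Q ((\<lambda>(s,r). (s*wa+r*va, s*wb+r*vb, s*wc+r*vc)) (s,r)) =
    qf A1 A2 A3 B12 B13 B23 wa wb wc * s^2 + bl A1 A2 A3 B12 B13 B23 wa wb wc va vb vc * s * r + qf A1 A2 A3 B12 B13 B23 va vb vc * r^2" for s r
    unfolding Q_def by (simp only: case_prod_conv fst_conv snd_conv qphi_gen[of _ _ _ _ _ _ s wa r va wb vb wc vc])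
qed

lemma LC:
  assumes u: "u \<noteq> (0,0,0)"
  shows "card {x. x \<noteq> (0,0,0) \<and> dot u x = 0 \<and> Q x = 0} = (card (UNIV::'a set) - 1) * kk (Dv u)"
proof -
  obtain u1 u2 u3 where uu: "u = (u1,u2,u3)" by (cases u) auto
  consider (c1) "u1 \<noteq> 0" | (c2) "u1 = 0" "u2 \<noteq> 0" | (c3) "u1 = 0" "u2 = 0" "u3 \<noteq> 0" using u uu by auto
  thus ?thesis
  proof cases
    case c1
    have cnz: "u1 \<noteq> 0" using c1 .
    show ?thesis
    proof (rule LC_wv[where wa="-u2" and wb="u1" and wc="0" and va="-u3" and vb="0" and vc="u1" and c="u1"])
      show "bij_betw (\<lambda>(s,r). (s*(-u2)+r*(-u3), s*u1+r*0, s*0+r*u1)) {p. p \<noteq> (0,0)} {x. x \<noteq> (0,0,0) \<and> dot u x = 0}"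
      proof (rule bij_betw_byWitness[where f'="(\<lambda>x. (fst (snd x)/u1, snd (snd x)/u1))"])
        show "\<forall>a\<in>{p. p \<noteq> (0,0)}. (\<lambda>x. (fst (snd x)/u1, snd (snd x)/u1)) ((\<lambda>(s,r). (s*(-u2)+r*(-u3), s*u1+r*0, s*0+r*u1)) a) = a"
          using cnz by auto
        show "\<forall>a'\<in>{x. x \<noteq> (0,0,0) \<and> dot u x = 0}. (\<lambda>(s,r). (s*(-u2)+r*(-u3), s*u1+r*0, s*0+r*u1)) ((\<lambda>x. (fst (snd x)/u1, snd (snd x)/u1)) a') = a'"
        proof
          fix x assume "x \<in> {x. x \<noteq> (0,0,0) \<and> dot u x = 0}"
          then obtain x1 x2 x3 where xx: "x = (x1,x2,x3)" "u1*x1 + u2*x2 + u3*x3 = 0" by (cases x) (auto simp: uu dot_def)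
          from xx(2) have "x2/u1*(-u2)+x3/u1*(-u3) = x1" using cnz solve_lin by blast
          thus "(\<lambda>(s,r). (s*(-u2)+r*(-u3), s*u1+r*0, s*0+r*u1)) ((\<lambda>x. (fst (snd x)/u1, snd (snd x)/u1)) x) = x" using cnz xx(1) by simp
        qed
        show "(\<lambda>(s,r). (s*(-u2)+r*(-u3), s*u1+r*0, s*0+r*u1)) ` {p. p \<noteq> (0,0)} \<subseteq> {x. x \<noteq> (0,0,0) \<and> dot u x = 0}"
        proof
          fix x assume "x \<in> (\<lambda>(s,r). (s*(-u2)+r*(-u3), s*u1+r*0, s*0+r*u1)) ` {p. p \<noteq> (0,0)}"
          then obtain s r where sr: "(s,r) \<noteq> (0,0)" "x = (\<lambda>(s,r). (s*(-u2)+r*(-u3), s*u1+r*0, s*0+r*u1)) (s,r)" by auto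
          show "x \<in> {x. x \<noteq> (0,0,0) \<and> dot u x = 0}"
            using sr cnz by (simp add: uu dot_def ring_distribs mult.commute mult.left_commute)
        qed
        show "(\<lambda>x. (fst (snd x)/u1, snd (snd x)/u1)) ` {x. x \<noteq> (0,0,0) \<and> dot u x = 0} \<subseteq> {p. p \<noteq> (0,0)}"
          using cnz by (auto simp: uu dot_def)
      qed
      show "(bl A1 A2 A3 B12 B13 B23 (-u2) u1 0 (-u3) 0 u1)^2 - 4*qf A1 A2 A3 B12 B13 B23 (-u2) u1 0 * qf A1 A2 A3 B12 B13 B23 (-u3) 0 u1 = u1^2 * Dv u"
        unfolding Dv_def uu using disc_c1 by simp
      show "u1 \<noteq> 0" by (rule cnz)
      show "\<not>(qf A1 A2 A3 B12 B13 B23 (-u2) u1 0 = 0 \<and> bl A1 A2 A3 B12 B13 B23 (-u2) u1 0 (-u3) 0 u1 = 0 \<and> qf A1 A2 A3 B12 B13 B23 (-u3) 0 u1 = 0)"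
      proof
        assume z: "qf A1 A2 A3 B12 B13 B23 (-u2) u1 0 = 0 \<and> bl A1 A2 A3 B12 B13 B23 (-u2) u1 0 (-u3) 0 u1 = 0 \<and> qf A1 A2 A3 B12 B13 B23 (-u3) 0 u1 = 0"
          show False using nd_c1[of A1 A2 A3 B12 B13 B23 u2 u1 u3] z cnz nd by (simp add: detM_zero)
      qed
    qed
  next
    case c2
    have cnz: "u2 \<noteq> 0" using c2(2) .
    show ?thesis
    proof (rule LC_wv[where wa="u2" and wb="-u1" and wc="0" and va="0" and vb="-u3" and vc="u2" and c="u2"])
      show "bij_betw (\<lambda>(s,r). (s*u2+r*0, s*(-u1)+r*(-u3), s*0+r*u2)) {p. p \<noteq> (0,0)} {x. x \<noteq> (0,0,0) \<and> dot u x = 0}"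
      proof (rule bij_betw_byWitness[where f'="(\<lambda>x. (fst x/u2, snd (snd x)/u2))"])
        show "\<forall>a\<in>{p. p \<noteq> (0,0)}. (\<lambda>x. (fst x/u2, snd (snd x)/u2)) ((\<lambda>(s,r). (s*u2+r*0, s*(-u1)+r*(-u3), s*0+r*u2)) a) = a"
          using cnz by auto
        show "\<forall>a'\<in>{x. x \<noteq> (0,0,0) \<and> dot u x = 0}. (\<lambda>(s,r). (s*u2+r*0, s*(-u1)+r*(-u3), s*0+r*u2)) ((\<lambda>x. (fst x/u2, snd (snd x)/u2)) a') = a'"
        proof
          fix x assume "x \<in> {x. x \<noteq> (0,0,0) \<and> dot u x = 0}"
          then obtain x1 x2 x3 where xx: "x = (x1,x2,x3)" "u1*x1 + u2*x2 + u3*x3 = 0" by (cases x) (auto simp: uu dot_def)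
          from xx(2) have "u2*x2 + u1*x1 + u3*x3 = 0" by (simp add: ac_simps)
          hence "x1/u2*(-u1)+x3/u2*(-u3) = x2" using cnz solve_lin by blast
          thus "(\<lambda>(s,r). (s*u2+r*0, s*(-u1)+r*(-u3), s*0+r*u2)) ((\<lambda>x. (fst x/u2, snd (snd x)/u2)) x) = x" using cnz xx(1) by simp
        qed
        show "(\<lambda>(s,r). (s*u2+r*0, s*(-u1)+r*(-u3), s*0+r*u2)) ` {p. p \<noteq> (0,0)} \<subseteq> {x. x \<noteq> (0,0,0) \<and> dot u x = 0}"
        proof
          fix x assume "x \<in> (\<lambda>(s,r). (s*u2+r*0, s*(-u1)+r*(-u3), s*0+r*u2)) ` {p. p \<noteq> (0,0)}"
          then obtain s r where sr: "(s,r) \<noteq> (0,0)" "x = (\<lambda>(s,r). (s*u2+r*0, s*(-u1)+r*(-u3), s*0+r*u2)) (s,r)" by auto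
          show "x \<in> {x. x \<noteq> (0,0,0) \<and> dot u x = 0}"
            using sr cnz by (simp add: uu dot_def ring_distribs mult.commute mult.left_commute)
        qed
        show "(\<lambda>x. (fst x/u2, snd (snd x)/u2)) ` {x. x \<noteq> (0,0,0) \<and> dot u x = 0} \<subseteq> {p. p \<noteq> (0,0)}"
          using cnz by (auto simp: uu dot_def)
      qed
      show "(bl A1 A2 A3 B12 B13 B23 u2 (-u1) 0 0 (-u3) u2)^2 - 4*qf A1 A2 A3 B12 B13 B23 u2 (-u1) 0 * qf A1 A2 A3 B12 B13 B23 0 (-u3) u2 = u2^2 * Dv u"
        unfolding Dv_def uu using disc_c2 by simp
      show "u2 \<noteq> 0" by (rule cnz)
      show "\<not>(qf A1 A2 A3 B12 B13 B23 u2 (-u1) 0 = 0 \<and> bl A1 A2 A3 B12 B13 B23 u2 (-u1) 0 0 (-u3) u2 = 0 \<and> qf A1 A2 A3 B12 B13 B23 0 (-u3) u2 = 0)"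
      proof
        assume z: "qf A1 A2 A3 B12 B13 B23 u2 (-u1) 0 = 0 \<and> bl A1 A2 A3 B12 B13 B23 u2 (-u1) 0 0 (-u3) u2 = 0 \<and> qf A1 A2 A3 B12 B13 B23 0 (-u3) u2 = 0"
          show False using nd_c2[of A1 A2 A3 B12 B13 B23 u2 u1 u3] z cnz nd by (simp add: detM_zero)
      qed
    qed
  next
    case c3
    have cnz: "u3 \<noteq> 0" using c3(3) .
    show ?thesis
    proof (rule LC_wv[where wa="u3" and wb="0" and wc="-u1" and va="0" and vb="u3" and vc="-u2" and c="u3"])
      show "bij_betw (\<lambda>(s,r). (s*u3+r*0, s*0+r*u3, s*(-u1)+r*(-u2))) {p. p \<noteq> (0,0)} {x. x \<noteq> (0,0,0) \<and> dot u x = 0}"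
      proof (rule bij_betw_byWitness[where f'="(\<lambda>x. (fst x/u3, fst (snd x)/u3))"])
        show "\<forall>a\<in>{p. p \<noteq> (0,0)}. (\<lambda>x. (fst x/u3, fst (snd x)/u3)) ((\<lambda>(s,r). (s*u3+r*0, s*0+r*u3, s*(-u1)+r*(-u2))) a) = a"
          using cnz by auto
        show "\<forall>a'\<in>{x. x \<noteq> (0,0,0) \<and> dot u x = 0}. (\<lambda>(s,r). (s*u3+r*0, s*0+r*u3, s*(-u1)+r*(-u2))) ((\<lambda>x. (fst x/u3, fst (snd x)/u3)) a') = a'"
        proof
          fix x assume "x \<in> {x. x \<noteq> (0,0,0) \<and> dot u x = 0}"
          then obtain x1 x2 x3 where xx: "x = (x1,x2,x3)" "u1*x1 + u2*x2 + u3*x3 = 0" by (cases x) (auto simp: uu dot_def)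
          from xx(2) have "u3*x3 + u1*x1 + u2*x2 = 0" by (simp add: ac_simps)
          hence "x1/u3*(-u1)+x2/u3*(-u2) = x3" using cnz solve_lin by blast
          thus "(\<lambda>(s,r). (s*u3+r*0, s*0+r*u3, s*(-u1)+r*(-u2))) ((\<lambda>x. (fst x/u3, fst (snd x)/u3)) x) = x" using cnz xx(1) by simp
        qed
        show "(\<lambda>(s,r). (s*u3+r*0, s*0+r*u3, s*(-u1)+r*(-u2))) ` {p. p \<noteq> (0,0)} \<subseteq> {x. x \<noteq> (0,0,0) \<and> dot u x = 0}"
        proof
          fix x assume "x \<in> (\<lambda>(s,r). (s*u3+r*0, s*0+r*u3, s*(-u1)+r*(-u2))) ` {p. p \<noteq> (0,0)}"
          then obtain s r where sr: "(s,r) \<noteq> (0,0)" "x = (\<lambda>(s,r). (s*u3+r*0, s*0+r*u3, s*(-u1)+r*(-u2))) (s,r)" by auto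
          show "x \<in> {x. x \<noteq> (0,0,0) \<and> dot u x = 0}"
            using sr cnz by (simp add: uu dot_def ring_distribs mult.commute mult.left_commute) blast
        qed
        show "(\<lambda>x. (fst x/u3, fst (snd x)/u3)) ` {x. x \<noteq> (0,0,0) \<and> dot u x = 0} \<subseteq> {p. p \<noteq> (0,0)}"
          using cnz by (auto simp: uu dot_def)
      qed
      show "(bl A1 A2 A3 B12 B13 B23 u3 0 (-u1) 0 u3 (-u2))^2 - 4*qf A1 A2 A3 B12 B13 B23 u3 0 (-u1) * qf A1 A2 A3 B12 B13 B23 0 u3 (-u2) = u3^2 * Dv u"
        unfolding Dv_def uu using disc_c3 by simp
      show "u3 \<noteq> 0" by (rule cnz)
      show "\<not>(qf A1 A2 A3 B12 B13 B23 u3 0 (-u1) = 0 \<and> bl A1 A2 A3 B12 B13 B23 u3 0 (-u1) 0 u3 (-u2) = 0 \<and> qf A1 A2 A3 B12 B13 B23 0 u3 (-u2) = 0)"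
      proof
        assume z: "qf A1 A2 A3 B12 B13 B23 u3 0 (-u1) = 0 \<and> bl A1 A2 A3 B12 B13 B23 u3 0 (-u1) 0 u3 (-u2) = 0 \<and> qf A1 A2 A3 B12 B13 B23 0 u3 (-u2) = 0"
          show False using nd_c3[of A1 A2 A3 B12 B13 B23 u3 u1 u2] z cnz nd by (simp add: detM_zero)
      qed
    qed
  qed
qed

end

definition sc3 :: "'a::times \<Rightarrow> 'a \<times> 'a \<times> 'a \<Rightarrow> 'a \<times> 'a \<times> 'a" where
  "sc3 k v = (k * fst v, k * fst (snd v), k * snd (snd v))"

definition hom3 :: "('a::field \<times> 'a \<times> 'a \<Rightarrow> bool) \<Rightarrow> bool" where
  "hom3 P \<longleftrightarrow> (\<forall>k v. k \<noteq> 0 \<longrightarrow> (P (sc3 k v) \<longleftrightarrow> P v))"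

lemma pclass3_sc: "w \<in> pclass3 K v \<longleftrightarrow> (\<exists>k\<in>K-{0}. w = sc3 k v)"
  unfolding pclass3_mem sc3_def by simp

lemma hom3_all: assumes K: "mclosed K" and H: "hom3 P" shows "(\<forall>w\<in>pclass3 K v. P w) \<longleftrightarrow> P v"
proof
  assume "\<forall>w\<in>pclass3 K v. P w" thus "P v" using pclass3_self[OF K] by blast
next
  assume Pv: "P v"
  show "\<forall>w\<in>pclass3 K v. P w"
  proof
    fix w assume "w \<in> pclass3 K v"
    then obtain k where k: "k \<in> K" "k \<noteq> 0" "w = sc3 k v" using pclass3_sc by blast
    have "P (sc3 k v) \<longleftrightarrow> P v" using H k(2) unfolding hom3_def by blast
    thus "P w" using Pv k(3) by simp
  qed
qed

lemma dot_sc_left: "dot (sc3 k u) v = k * dot u v" by (simp add: dot_def sc3_def algebra_simps)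
lemma dot_sc_right: "dot u (sc3 k v) = k * dot u v" by (simp add: dot_def sc3_def algebra_simps)
lemma dot_comm: "dot u v = dot v u" by (simp add: dot_def mult.commute)

lemma card_UNIV_ge2: "card (UNIV::'a::{finite,field} set) \<ge> 2"
proof -
  have "{0::'a, 1} \<subseteq> UNIV" by simp
  hence "card {0::'a, 1} \<le> card (UNIV::'a set)" by (rule card_mono[rotated]) simp
  thus ?thesis by simp
qed

lemma card_UNIV_minus0: "card (UNIV - {0::'a::{finite,field}}) = card (UNIV::'a set) - 1"
  by (simp add: card_Diff_subset)

lemma kk_eq1: "kk D = 1 \<longleftrightarrow> D = 0" by (simp add: kk_def)
lemma kk_eq2: "kk D = 2 \<longleftrightarrow> (\<exists>s. s \<noteq> 0 \<and> s^2 = D)" by (auto simp: kk_def)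

locale mainctx = fq q \<omega> eps for q and \<omega> eps :: "'a::{finite,field}" +
  fixes a b c d e :: 'a
  assumes nonsing: "conic_nonsingular a b c d e" and d1: "d = 1" and b_notin: "b \<notin> subfield_q q"
    and sq: "\<exists>s. s \<noteq> 0 \<and> s ^ 2 = - b * c * d + a * d ^ 2 + b ^ 2 * e"
begin

lemma det1: "detM a 0 e b c d \<noteq> 0"
proof -
  have "detM a 0 e b c d = (2*a) * (0 * (2*e) - d * d) - b * (b * (2*e) - d * c) + c * (b * d - 0 * c)"
    by (simp add: detM_def algebra_simps power2_eq_square)
  thus ?thesis using nonsing unfolding conic_nonsingular_def by simp
qed

sublocale T1: tqf a 0 e b c d
  by unfold_locales (rule two_ne0, rule det1)

sublocale T2: tqf "d^2 - 4*0*e" "c^2 - 4*a*e" "b^2 - 4*a*0" "2*(2*e*b - c*d)" "2*(2*0*c - b*d)" "2*(2*a*d - b*c)"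
proof unfold_locales
  show "(2::'a) \<noteq> 0" by (rule two_ne0)
  have eq: "detM (d^2 - 4*0*e) (c^2 - 4*a*e) (b^2 - 4*a*0) (2*(2*e*b - c*d)) (2*(2*0*c - b*d)) (2*(2*a*d - b*c))
     = - 8 * (detM a 0 e b c d)^2" by (rule ddet_gen)
  have "(8::'a) \<noteq> 0"
  proof -
    have "(8::'a) = 2 * 4" by simp
    thus ?thesis using four_ne0 two_ne0 by (simp only: mult_eq_0_iff) simp
  qed
  hence ne: "- 8 * (detM a 0 e b c d)^2 \<noteq> 0" using det1 by simp
  show "detM (d^2 - 4*0*e) (c^2 - 4*a*e) (b^2 - 4*a*0) (2*(2*e*b - c*d)) (2*(2*0*c - b*d)) (2*(2*a*d - b*c)) \<noteq> 0"
    unfolding eq by (rule ne)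
qed

lemma conic_Q: "conic_form a b c d e v = T1.Q v"
  unfolding conic_form_def T1.Q_def qf_def by (cases v) (simp add: algebra_simps)

lemma T2Q: "T2.Q u = T1.Dv u"
  by (simp only: T2.Q_def T1.Dv_def Dl_def)

lemma Q_sc: "T1.Q (sc3 k v) = k^2 * T1.Q v"
  unfolding T1.Q_def sc3_def by (simp add: qf_hom)
lemma Dv_sc: "T1.Dv (sc3 k v) = k^2 * T1.Dv v"
  unfolding T1.Dv_def sc3_def Dl_def by (simp add: qf_hom)

lemma T2Dv: "\<exists>r. r \<noteq> 0 \<and> T2.Dv v = r^2 * T1.Q v"
proof -
  obtain s where s: "s \<noteq> 0" "s ^ 2 = - b * c * d + a * d ^ 2 + b ^ 2 * e" using sq by blast
  have "T2.Dv v = - 8 * detM a 0 e b c d * T1.Q v"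
    unfolding T2.Dv_def T1.Q_def by (rule dd_gen)
  also have "- 8 * detM a 0 e b c d = (4*s)^2"
  proof -
    have h: "s^2 = a + b^2*e - b*c" using s d1 by (simp add: algebra_simps)
    have "- 8 * detM a 0 e b c d = 16*(a + b^2*e - b*c)" using d1 by (simp add: detM_def algebra_simps power2_eq_square)
    also have "\<dots> = (4*s)^2" using h by (simp add: power_mult_distrib)
    finally show ?thesis .
  qed
  finally have "T2.Dv v = (4*s)^2 * T1.Q v" .
  moreover have "4*s \<noteq> 0" using s four_ne0 by simp
  ultimately show ?thesis by blast
qed

lemma hom_dot_left: "hom3 (\<lambda>u. dot u x = 0)"
  unfolding hom3_def by (simp add: dot_sc_left)
lemma hom_dot_right: "hom3 (\<lambda>x. dot u x = 0)"
  unfolding hom3_def by (simp add: dot_sc_right)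
lemma hom_Q: "hom3 (\<lambda>x. T1.Q x = 0)"
  unfolding hom3_def by (simp add: Q_sc)
lemma hom_Dv: "hom3 (\<lambda>x. T1.Dv x = 0)"
  unfolding hom3_def by (simp add: Dv_sc)
lemma hom_and: "hom3 P \<Longrightarrow> hom3 R \<Longrightarrow> hom3 (\<lambda>x. P x \<and> R x)"
  unfolding hom3_def by blast

lemma incident_class:
  "incident P (pclass3 UNIV u) \<longleftrightarrow> (\<forall>x\<in>P. dot u x = 0)"
proof -
  have "incident P (pclass3 UNIV u) \<longleftrightarrow> (\<forall>x\<in>P. \<forall>u'\<in>pclass3 UNIV u. dot u' x = 0)"
    by (simp add: incident_def dot_def)
  also have "\<dots> \<longleftrightarrow> (\<forall>x\<in>P. dot u x = 0)"
  proof -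
    have "(\<forall>u'\<in>pclass3 UNIV u. dot u' x = 0) \<longleftrightarrow> dot u x = 0" for x
      using hom3_all[OF mclosed_UNIV hom_dot_left[of x]] by simp
    thus ?thesis by simp
  qed
  finally show ?thesis .
qed

lemma tangent_iff:
  assumes u: "u \<noteq> (0,0,0)"
  shows "tangent_line a b c d e (pclass3 UNIV u) \<longleftrightarrow> T1.Dv u = 0"
proof -
  let ?n = "card (UNIV::'a set)"
  have L: "pclass3 UNIV u \<in> proj_plane UNIV" unfolding proj_plane_def using u by (intro CollectI exI[of _ u]) simp
  have set: "{P \<in> conic_points a b c d e. incident P (pclass3 UNIV u)} =
             {P \<in> proj_plane UNIV. \<forall>x\<in>P. T1.Q x = 0 \<and> dot u x = 0}"
  proof (rule set_eqI)
    fix P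
    have "P \<in> {P \<in> conic_points a b c d e. incident P (pclass3 UNIV u)} \<longleftrightarrow>
          P \<in> proj_plane UNIV \<and> (\<forall>v\<in>P. T1.Q v = 0) \<and> (\<forall>x\<in>P. dot u x = 0)"
      by (simp add: conic_points_def incident_class conic_Q)
    also have "\<dots> \<longleftrightarrow> P \<in> {P \<in> proj_plane UNIV. \<forall>x\<in>P. T1.Q x = 0 \<and> dot u x = 0}" by auto
    finally show "P \<in> {P \<in> conic_points a b c d e. incident P (pclass3 UNIV u)} \<longleftrightarrow>
          P \<in> {P \<in> proj_plane UNIV. \<forall>x\<in>P. T1.Q x = 0 \<and> dot u x = 0}" .
  qed
  have "card (UNIV - {0::'a}) * card {P \<in> proj_plane UNIV. \<forall>x\<in>P. T1.Q x = 0 \<and> dot u x = 0}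
      = card {x \<in> UNIV\<times>UNIV\<times>UNIV. x \<noteq> (0,0,0) \<and> (\<forall>w\<in>pclass3 UNIV x. T1.Q w = 0 \<and> dot u w = 0)}"
    by (rule count3[OF mclosed_UNIV])
  also have "{x \<in> UNIV\<times>UNIV\<times>UNIV. x \<noteq> (0,0,0) \<and> (\<forall>w\<in>pclass3 UNIV x. T1.Q w = 0 \<and> dot u w = 0)}
      = {x. x \<noteq> (0,0,0) \<and> dot u x = 0 \<and> T1.Q x = 0}"
  proof -
    have h: "(\<forall>w\<in>pclass3 UNIV x. T1.Q w = 0 \<and> dot u w = 0) \<longleftrightarrow> (T1.Q x = 0 \<and> dot u x = 0)" for x
      by (rule hom3_all[OF mclosed_UNIV hom_and[OF hom_Q hom_dot_right]])
    have "x \<in> {x \<in> UNIV\<times>UNIV\<times>UNIV. x \<noteq> (0,0,0) \<and> (\<forall>w\<in>pclass3 UNIV x. T1.Q w = 0 \<and> dot u w = 0)}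
      \<longleftrightarrow> x \<in> {x. x \<noteq> (0,0,0) \<and> dot u x = 0 \<and> T1.Q x = 0}" for x
      using h[of x] by auto
    thus ?thesis by blast
  qed
  also have "card \<dots> = (?n - 1) * kk (T1.Dv u)" by (rule T1.LC[OF u])
  finally have "(?n - 1) * card {P \<in> conic_points a b c d e. incident P (pclass3 UNIV u)} = (?n - 1) * kk (T1.Dv u)"
    unfolding set card_UNIV_minus0 .
  moreover have "?n - 1 > 0" using card_UNIV_ge2[where 'a='a] by simp
  ultimately have "card {P \<in> conic_points a b c d e. incident P (pclass3 UNIV u)} = kk (T1.Dv u)" by simp
  thus ?thesis unfolding tangent_line_def using L kk_eq1 by simp
qed

lemma tangents_through:
  assumes v: "v \<noteq> (0,0,0)"
  shows "card {L. tangent_line a b c d e L \<and> incident (pclass3 UNIV v) L} = kk (T1.Q v)"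
proof -
  let ?n = "card (UNIV::'a set)"
  have set: "{L. tangent_line a b c d e L \<and> incident (pclass3 UNIV v) L} =
             {L \<in> proj_plane UNIV. \<forall>u\<in>L. T1.Dv u = 0 \<and> dot u v = 0}"
  proof (rule set_eqI)
    fix L
    show "L \<in> {L. tangent_line a b c d e L \<and> incident (pclass3 UNIV v) L} \<longleftrightarrow>
          L \<in> {L \<in> proj_plane UNIV. \<forall>u\<in>L. T1.Dv u = 0 \<and> dot u v = 0}"
    proof (cases "L \<in> proj_plane UNIV")
      case False thus ?thesis unfolding tangent_line_def by simp
    next
      case True
      then obtain u where u: "L = pclass3 UNIV u" "u \<noteq> (0,0,0)" unfolding proj_plane_def by blast
      have i1: "incident (pclass3 UNIV v) L \<longleftrightarrow> dot u v = 0"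
        unfolding u(1) incident_class by (rule hom3_all[OF mclosed_UNIV hom_dot_right])
      have i2: "(\<forall>u'\<in>L. T1.Dv u' = 0 \<and> dot u' v = 0) \<longleftrightarrow> T1.Dv u = 0 \<and> dot u v = 0"
        unfolding u(1) by (rule hom3_all[OF mclosed_UNIV hom_and[OF hom_Dv hom_dot_left]])
      have t: "tangent_line a b c d e L \<longleftrightarrow> T1.Dv u = 0" using tangent_iff[OF u(2)] u(1) by simp
      show ?thesis using t i1 i2 True by simp
    qed
  qed
  have "card (UNIV - {0::'a}) * card {L \<in> proj_plane UNIV. \<forall>u\<in>L. T1.Dv u = 0 \<and> dot u v = 0}
      = card {x \<in> UNIV\<times>UNIV\<times>UNIV. x \<noteq> (0,0,0) \<and> (\<forall>w\<in>pclass3 UNIV x. T1.Dv w = 0 \<and> dot w v = 0)}"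
    by (rule count3[OF mclosed_UNIV])
  also have "{x \<in> UNIV\<times>UNIV\<times>UNIV. x \<noteq> (0,0,0) \<and> (\<forall>w\<in>pclass3 UNIV x. T1.Dv w = 0 \<and> dot w v = 0)}
      = {x. x \<noteq> (0,0,0) \<and> dot v x = 0 \<and> T2.Q x = 0}"
  proof -
    have h: "(\<forall>w\<in>pclass3 UNIV x. T1.Dv w = 0 \<and> dot w v = 0) \<longleftrightarrow> (T1.Dv x = 0 \<and> dot x v = 0)" for x
      by (rule hom3_all[OF mclosed_UNIV hom_and[OF hom_Dv hom_dot_left]])
    have "x \<in> {x \<in> UNIV\<times>UNIV\<times>UNIV. x \<noteq> (0,0,0) \<and> (\<forall>w\<in>pclass3 UNIV x. T1.Dv w = 0 \<and> dot w v = 0)}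
      \<longleftrightarrow> x \<in> {x. x \<noteq> (0,0,0) \<and> dot v x = 0 \<and> T2.Q x = 0}" for x
    proof -
      have l: "x \<in> {x \<in> UNIV\<times>UNIV\<times>UNIV. x \<noteq> (0,0,0) \<and> (\<forall>w\<in>pclass3 UNIV x. T1.Dv w = 0 \<and> dot w v = 0)}
         \<longleftrightarrow> (x \<noteq> (0,0,0) \<and> T1.Dv x = 0 \<and> dot x v = 0)" using h[of x] by simp
      have r: "x \<in> {x. x \<noteq> (0,0,0) \<and> dot v x = 0 \<and> T2.Q x = 0} \<longleftrightarrow> (x \<noteq> (0,0,0) \<and> dot v x = 0 \<and> T1.Dv x = 0)"
        using T2Q[of x] by simp
      show ?thesis unfolding l r using dot_comm[of x v] by auto
    qed
    thus ?thesis by blast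
  qed
  also have "card \<dots> = (?n - 1) * kk (T2.Dv v)" by (rule T2.LC[OF v])
  also have "kk (T2.Dv v) = kk (T1.Q v)"
  proof -
    obtain r where r: "r \<noteq> 0" "T2.Dv v = r^2 * T1.Q v" using T2Dv[of v] by blast
    thus ?thesis using kk_scale[OF r(1)] by simp
  qed
  finally have "(?n - 1) * card {L. tangent_line a b c d e L \<and> incident (pclass3 UNIV v) L} = (?n - 1) * kk (T1.Q v)"
    unfolding set card_UNIV_minus0 .
  moreover have "?n - 1 > 0" using card_UNIV_ge2[where 'a='a] by simp
  ultimately show ?thesis by simp
qed

end

definition sc4 :: "'a::times \<Rightarrow> 'a\<times>'a\<times>'a\<times>'a \<Rightarrow> 'a\<times>'a\<times>'a\<times>'a" where
  "sc4 k v = (k * fst v, k * fst (snd v), k * fst (snd (snd v)), k * snd (snd (snd v)))"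
definition hom4 :: "('a::field \<times> 'a \<times> 'a \<times> 'a \<Rightarrow> bool) \<Rightarrow> bool" where
  "hom4 P \<longleftrightarrow> (\<forall>k v. k \<noteq> 0 \<longrightarrow> (P (sc4 k v) \<longleftrightarrow> P v))"

lemma pclass4_sc: "w \<in> pclass4 K v \<longleftrightarrow> (\<exists>k\<in>K-{0}. w = sc4 k v)"
  unfolding pclass4_mem sc4_def by simp

lemma hom4_all: assumes K: "mclosed K" and H: "hom4 P" shows "(\<forall>w\<in>pclass4 K v. P w) \<longleftrightarrow> P v"
proof
  assume "\<forall>w\<in>pclass4 K v. P w" thus "P v" using pclass4_self[OF K] by blast
next
  assume Pv: "P v"
  show "\<forall>w\<in>pclass4 K v. P w"
  proof
    fix w assume "w \<in> pclass4 K v"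
    then obtain k where k: "k \<in> K" "k \<noteq> 0" "w = sc4 k v" using pclass4_sc by blast
    have "P (sc4 k v) \<longleftrightarrow> P v" using H k(2) unfolding hom4_def by blast
    thus "P w" using Pv k(3) by simp
  qed
qed

lemma key_id: fixes eps :: "'a::comm_ring_1"
  assumes "\<omega> = eps^2"
  shows "((t1+eps*t2)^2 - ((a1+eps*a2)*X^2 + (c1+eps*c2)*X*Z + (e1+eps*e2)*Z^2)) * ((b1 - eps*b2)*X + Z)
     = ((t1^2+\<omega>*t2^2 - (a1*X^2+c1*X*Z+e1*Z^2))*(b1*X+Z) - \<omega>*(2*t1*t2 - (a2*X^2+c2*X*Z+e2*Z^2))*b2*X)
       + eps * (2 * t1 * t2 * (b1 * X + 1 * Z) - (t1^2 + \<omega> * t2^2) * (b2 * X + 0 * Z)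
         + (- a2 * b1 + a1 * b2) * X^3 + (b2 * c1 - b1 * c2 - a2 * 1 + a1 * 0) * X^2 * Z
         + (- c2 * 1 + c1 * 0 + b2 * e1 - b1 * e2) * X * Z^2 + (0 * e1 - 1 * e2) * Z^3)"
  using assms by (simp add: algebra_simps power2_eq_square power3_eq_cube)

context mainctx
begin

lemma mclosed_Fq: "mclosed Fq" unfolding mclosed_def using Fq_1 Fq_mult Fq_inverse by blast

lemma hom_ext: "hom3 (\<lambda>v. kk (T1.Q v) = 2)"
  unfolding hom3_def
proof (intro allI impI)
  fix k v assume k: "(k::'a) \<noteq> 0"
  show "(kk (T1.Q (sc3 k v)) = 2) = (kk (T1.Q v) = 2)" by (simp only: Q_sc kk_scale[OF k])
qed

lemma cls_inter:
  assumes v: "v \<in> Fq\<times>Fq\<times>Fq" "v \<noteq> (0,0,0)"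
  shows "pclass3 UNIV v \<inter> (Fq\<times>Fq\<times>Fq) = pclass3 Fq v"
proof (rule set_eqI, rule iffI)
  fix w assume w: "w \<in> pclass3 UNIV v \<inter> (Fq\<times>Fq\<times>Fq)"
  then obtain k where k: "k \<noteq> 0" "w = sc3 k v" using pclass3_sc by blast
  obtain v1 v2 v3 where vv: "v = (v1,v2,v3)" by (cases v) auto
  have wq: "k*v1 \<in> Fq" "k*v2 \<in> Fq" "k*v3 \<in> Fq" using w k vv by (auto simp: sc3_def)
  have vq: "v1 \<in> Fq" "v2 \<in> Fq" "v3 \<in> Fq" using v(1) vv by auto
  have "k \<in> Fq"
  proof -
    consider "v1 \<noteq> 0" | "v2 \<noteq> 0" | "v3 \<noteq> 0" using v(2) vv by auto
    thus ?thesis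
    proof cases
      case 1
      have "(k*v1)/v1 \<in> Fq" using Fq_divide wq(1) vq(1) by blast
      thus ?thesis using 1 by simp
    next
      case 2
      have "(k*v2)/v2 \<in> Fq" using Fq_divide wq(2) vq(2) by blast
      thus ?thesis using 2 by simp
    next
      case 3
      have "(k*v3)/v3 \<in> Fq" using Fq_divide wq(3) vq(3) by blast
      thus ?thesis using 3 by simp
    qed
  qed
  thus "w \<in> pclass3 Fq v" using k pclass3_sc by blast
next
  fix w assume "w \<in> pclass3 Fq v"
  then obtain k where k: "k \<in> Fq" "k \<noteq> 0" "w = sc3 k v" using pclass3_sc by blast
  obtain v1 v2 v3 where vv: "v = (v1,v2,v3)" by (cases v) auto
  have "w \<in> Fq\<times>Fq\<times>Fq" using k v(1) vv by (simp add: sc3_def Fq_mult)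
  moreover have "w \<in> pclass3 UNIV v" using k pclass3_sc by blast
  ultimately show "w \<in> pclass3 UNIV v \<inter> (Fq\<times>Fq\<times>Fq)" by blast
qed

definition Eset :: "('a\<times>'a\<times>'a) set set" where
  "Eset = {P \<in> proj_plane UNIV. (\<exists>v\<in>P. v \<in> Fq\<times>Fq\<times>Fq) \<and> (\<forall>w\<in>P. kk (T1.Q w) = 2)}"

lemma Eq_Eset: "E_q q a b c d e = card Eset"
proof -
  have h: "card {L. tangent_line a b c d e L \<and> incident P L} = 2 \<longleftrightarrow> (\<forall>w\<in>P. kk (T1.Q w) = 2)"
    if P: "P \<in> proj_plane UNIV" for P
  proof -
    obtain v where v: "P = pclass3 UNIV v" "v \<noteq> (0,0,0)" using P unfolding proj_plane_def by blast
    have "card {L. tangent_line a b c d e L \<and> incident P L} = kk (T1.Q v)"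
      unfolding v(1) by (rule tangents_through[OF v(2)])
    moreover have "(\<forall>w\<in>P. kk (T1.Q w) = 2) \<longleftrightarrow> kk (T1.Q v) = 2"
      unfolding v(1) by (rule hom3_all[OF mclosed_UNIV hom_ext])
    ultimately show ?thesis by simp
  qed
  have "{P \<in> proj_plane (UNIV::'a set). (\<exists>v\<in>P. v \<in> Fq \<times> Fq \<times> Fq) \<and> card {L. tangent_line a b c d e L \<and> incident P L} = 2}
     = Eset" unfolding Eset_def
  proof (rule Collect_cong)
    fix P show "(P \<in> proj_plane UNIV \<and> (\<exists>v\<in>P. v \<in> Fq \<times> Fq \<times> Fq) \<and> card {L. tangent_line a b c d e L \<and> incident P L} = 2) \<longleftrightarrow>
       (P \<in> proj_plane UNIV \<and> (\<exists>v\<in>P. v \<in> Fq\<times>Fq\<times>Fq) \<and> (\<forall>w\<in>P. kk (T1.Q w) = 2))"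
      using h[of P] by blast
  qed
  thus ?thesis unfolding E_q_def by simp
qed

lemma Eset_card: "card (Fq - {0}) * card Eset = card {v \<in> Fq\<times>Fq\<times>Fq. v \<noteq> (0,0,0) \<and> kk (T1.Q v) = 2}"
proof -
  let ?PE = "{P \<in> proj_plane Fq. \<forall>w\<in>P. kk (T1.Q w) = 2}"
  let ?f = "\<lambda>P. P \<inter> (Fq\<times>Fq\<times>Fq)"
  have rep: "\<exists>v. P = pclass3 UNIV v \<and> v \<in> Fq\<times>Fq\<times>Fq \<and> v \<noteq> (0,0,0) \<and> ?f P = pclass3 Fq v" if P: "P \<in> Eset" for P
  proof -
    obtain x where x: "P = pclass3 UNIV x" "x \<noteq> (0,0,0)" using P unfolding Eset_def proj_plane_def by blast
    obtain v where v: "v \<in> P" "v \<in> Fq\<times>Fq\<times>Fq" using P unfolding Eset_def by blast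
    have Pv: "P = pclass3 UNIV v" using pclass3_eq[OF mclosed_UNIV, of v x] v(1) x(1) by simp
    have "v \<noteq> (0,0,0)" using pclass3_sub[OF mclosed_UNIV _ x(2), of v] v(1) x(1) by simp
    thus ?thesis using Pv v(2) cls_inter by blast
  qed
  have inj: "inj_on ?f Eset"
  proof (rule inj_onI)
    fix P1 P2 assume P: "P1 \<in> Eset" "P2 \<in> Eset" "?f P1 = ?f P2"
    obtain v1 where v1: "P1 = pclass3 UNIV v1" "v1 \<in> Fq\<times>Fq\<times>Fq" "v1 \<noteq> (0,0,0)" using rep[OF P(1)] by blast
    have "v1 \<in> ?f P1" using v1 pclass3_self[OF mclosed_UNIV] by blast
    hence "v1 \<in> P2" using P(3) by blast
    obtain x2 where x2: "P2 = pclass3 UNIV x2" using P(2) unfolding Eset_def proj_plane_def by blast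
    have "P2 = pclass3 UNIV v1" using pclass3_eq[OF mclosed_UNIV, of v1 x2] \<open>v1 \<in> P2\<close> x2 by simp
    thus "P1 = P2" using v1(1) by simp
  qed
  have img: "?f ` Eset = ?PE"
  proof (rule set_eqI, rule iffI)
    fix Pq assume "Pq \<in> ?f ` Eset"
    then obtain P where P: "P \<in> Eset" "Pq = ?f P" by blast
    obtain v where v: "P = pclass3 UNIV v" "v \<in> Fq\<times>Fq\<times>Fq" "v \<noteq> (0,0,0)" "?f P = pclass3 Fq v" using rep[OF P(1)] by blast
    have "Pq \<in> proj_plane Fq" unfolding proj_plane_def using P(2) v by blast
    moreover have "\<forall>w\<in>Pq. kk (T1.Q w) = 2" using P unfolding Eset_def by blast
    ultimately show "Pq \<in> ?PE" by blast
  next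
    fix Pq assume Pq: "Pq \<in> ?PE"
    then obtain v where v: "Pq = pclass3 Fq v" "v \<in> Fq\<times>Fq\<times>Fq" "v \<noteq> (0,0,0)" unfolding proj_plane_def by blast
    have kv: "kk (T1.Q v) = 2" using Pq v(1) pclass3_self[OF mclosed_Fq, of v] by blast
    let ?P = "pclass3 UNIV v"
    have "?P \<in> proj_plane UNIV" unfolding proj_plane_def using v(3) by (intro CollectI exI[of _ v]) simp
    moreover have "\<exists>x\<in>?P. x \<in> Fq\<times>Fq\<times>Fq" using pclass3_self[OF mclosed_UNIV, of v] v(2) by blast
    moreover have "\<forall>w\<in>?P. kk (T1.Q w) = 2" using hom3_all[OF mclosed_UNIV hom_ext, of v] kv by simp
    ultimately have "?P \<in> Eset" unfolding Eset_def by blast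
    moreover have "?f ?P = Pq" using cls_inter[OF v(2,3)] v(1) by simp
    ultimately show "Pq \<in> ?f ` Eset" by blast
  qed
  have "card Eset = card ?PE" using card_image[OF inj] img by simp
  moreover have "card (Fq - {0}) * card ?PE = card {v \<in> Fq\<times>Fq\<times>Fq. v \<noteq> (0,0,0) \<and> (\<forall>w\<in>pclass3 Fq v. kk (T1.Q w) = 2)}"
    by (rule count3[OF mclosed_Fq])
  moreover have "{v \<in> Fq\<times>Fq\<times>Fq. v \<noteq> (0,0,0) \<and> (\<forall>w\<in>pclass3 Fq v. kk (T1.Q w) = 2)}
     = {v \<in> Fq\<times>Fq\<times>Fq. v \<noteq> (0,0,0) \<and> kk (T1.Q v) = 2}"
  proof (rule Collect_cong)
    fix v show "(v \<in> Fq\<times>Fq\<times>Fq \<and> v \<noteq> (0,0,0) \<and> (\<forall>w\<in>pclass3 Fq v. kk (T1.Q w) = 2)) \<longleftrightarrow>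
                (v \<in> Fq\<times>Fq\<times>Fq \<and> v \<noteq> (0,0,0) \<and> kk (T1.Q v) = 2)"
      using hom3_all[OF mclosed_Fq hom_ext, of v] by simp
  qed
  ultimately show ?thesis by simp
qed


abbreviation Sp where "Sp v \<equiv> surface_poly q eps \<omega> a b c d e v"

lemma surf_hom: "Sp (sc4 k v) = k^3 * Sp v"
  unfolding surface_poly_def Let_def sc4_def
  by (cases v) (simp add: algebra_simps power2_eq_square power3_eq_cube)

definition psi4 :: "'a\<times>'a\<times>'a\<times>'a \<Rightarrow> bool" where
  "psi4 v \<longleftrightarrow> Sp v = 0 \<and> \<not>(fst v = 0 \<and> fst (snd v) = 0) \<and> \<not>(fst (snd (snd v)) = 0 \<and> snd (snd (snd v)) = 0)"

lemma hom_S: "hom4 (\<lambda>v. Sp v = 0)"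
  unfolding hom4_def by (simp add: surf_hom)
lemma hom_T: "hom4 (\<lambda>v. fst v = 0 \<and> fst (snd v) = 0)"
  unfolding hom4_def by (simp add: sc4_def)
lemma hom_X: "hom4 (\<lambda>v. fst (snd (snd v)) = 0 \<and> snd (snd (snd v)) = 0)"
  unfolding hom4_def by (simp add: sc4_def)
lemma hom_psi4: "hom4 psi4"
  unfolding hom4_def
proof (intro allI impI)
  fix k v assume k: "(k::'a) \<noteq> 0"
  have "Sp (sc4 k v) = 0 \<longleftrightarrow> Sp v = 0" using hom_S k unfolding hom4_def by blast
  moreover have "(fst (sc4 k v) = 0 \<and> fst (snd (sc4 k v)) = 0) \<longleftrightarrow> (fst v = 0 \<and> fst (snd v) = 0)"
    using hom_T k unfolding hom4_def by blast
  moreover have "(fst (snd (snd (sc4 k v))) = 0 \<and> snd (snd (snd (sc4 k v))) = 0) \<longleftrightarrow> (fst (snd (snd v)) = 0 \<and> snd (snd (snd v)) = 0)"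
    using hom_X k unfolding hom4_def by blast
  ultimately show "psi4 (sc4 k v) \<longleftrightarrow> psi4 v" unfolding psi4_def by simp
qed

lemma surface_split:
  "real (card (surface_points q eps \<omega> a b c d e))
     - real (card {P \<in> surface_points q eps \<omega> a b c d e. \<forall>v\<in>P. fst v = 0 \<and> fst (snd v) = 0})
     - real (card {P \<in> surface_points q eps \<omega> a b c d e. \<forall>v\<in>P. fst (snd (snd v)) = 0 \<and> snd (snd (snd v)) = 0})
   = real (card {P \<in> proj_space3 Fq. \<forall>v\<in>P. psi4 v})"
proof -
  let ?SP = "surface_points q eps \<omega> a b c d e"
  let ?T = "{P \<in> ?SP. \<forall>v\<in>P. fst v = 0 \<and> fst (snd v) = 0}"
  let ?X = "{P \<in> ?SP. \<forall>v\<in>P. fst (snd (snd v)) = 0 \<and> snd (snd (snd v)) = 0}"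
  let ?W = "{P \<in> proj_space3 Fq. \<forall>v\<in>P. psi4 v}"
  have fin: "finite ?SP" by (rule finite_subset[of _ UNIV]) auto
  have disj: "?T \<inter> ?X = {}"
  proof (rule ccontr)
    assume "?T \<inter> ?X \<noteq> {}"
    then obtain P where P: "P \<in> ?T" "P \<in> ?X" by blast
    then obtain v where v: "P = pclass4 Fq v" "v \<noteq> (0,0,0,0)" unfolding surface_points_def proj_space3_def by blast
    have "v \<in> P" using v(1) pclass4_self[OF mclosed_Fq] by blast
    hence "fst v = 0 \<and> fst (snd v) = 0 \<and> fst (snd (snd v)) = 0 \<and> snd (snd (snd v)) = 0" using P by blast
    thus False using v(2) by (cases v) auto
  qed
  have W: "?SP - (?T \<union> ?X) = ?W"
  proof (rule set_eqI)
    fix P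
    show "P \<in> ?SP - (?T \<union> ?X) \<longleftrightarrow> P \<in> ?W"
    proof (cases "P \<in> proj_space3 Fq")
      case False thus ?thesis unfolding surface_points_def by simp
    next
      case True
      then obtain v where v: "P = pclass4 Fq v" unfolding proj_space3_def by blast
      have h1: "(\<forall>w\<in>P. Sp w = 0) \<longleftrightarrow> Sp v = 0" unfolding v by (rule hom4_all[OF mclosed_Fq hom_S])
      have h2: "(\<forall>w\<in>P. fst w = 0 \<and> fst (snd w) = 0) \<longleftrightarrow> (fst v = 0 \<and> fst (snd v) = 0)"
        unfolding v by (rule hom4_all[OF mclosed_Fq hom_T])
      have h3: "(\<forall>w\<in>P. fst (snd (snd w)) = 0 \<and> snd (snd (snd w)) = 0) \<longleftrightarrow> (fst (snd (snd v)) = 0 \<and> snd (snd (snd v)) = 0)"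
        unfolding v by (rule hom4_all[OF mclosed_Fq hom_X])
      have h4: "(\<forall>w\<in>P. psi4 w) \<longleftrightarrow> psi4 v" unfolding v by (rule hom4_all[OF mclosed_Fq hom_psi4])
      have "P \<in> ?SP - (?T \<union> ?X) \<longleftrightarrow> (Sp v = 0 \<and> \<not>(fst v = 0 \<and> fst (snd v) = 0) \<and> \<not>(fst (snd (snd v)) = 0 \<and> snd (snd (snd v)) = 0))"
        using True h1 h2 h3 unfolding surface_points_def by auto
      also have "\<dots> \<longleftrightarrow> P \<in> ?W" using True h4 unfolding psi4_def by simp
      finally show ?thesis .
    qed
  qed
  have sub: "?T \<union> ?X \<subseteq> ?SP" by blast
  have "card ?W = card ?SP - card (?T \<union> ?X)" using W card_Diff_subset[OF finite_subset[OF sub fin] sub] by simp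
  moreover have "card (?T \<union> ?X) = card ?T + card ?X"
    by (rule card_Un_disjoint) (use fin disj in auto)
  moreover have "card (?T \<union> ?X) \<le> card ?SP" by (rule card_mono[OF fin sub])
  ultimately show ?thesis by simp
qed

lemma W_card: "card (Fq - {0}) * card {P \<in> proj_space3 Fq. \<forall>v\<in>P. psi4 v} = card {v \<in> Fq\<times>Fq\<times>Fq\<times>Fq. psi4 v}"
proof -
  have "card (Fq - {0}) * card {P \<in> proj_space3 Fq. \<forall>v\<in>P. psi4 v}
     = card {v \<in> Fq\<times>Fq\<times>Fq\<times>Fq. v \<noteq> (0,0,0,0) \<and> (\<forall>w\<in>pclass4 Fq v. psi4 w)}"
    by (rule count4[OF mclosed_Fq])
  also have "{v \<in> Fq\<times>Fq\<times>Fq\<times>Fq. v \<noteq> (0,0,0,0) \<and> (\<forall>w\<in>pclass4 Fq v. psi4 w)} = {v \<in> Fq\<times>Fq\<times>Fq\<times>Fq. psi4 v}"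
  proof (rule Collect_cong)
    fix v
    have "psi4 v \<Longrightarrow> v \<noteq> (0,0,0,0)" unfolding psi4_def by auto
    thus "(v \<in> Fq\<times>Fq\<times>Fq\<times>Fq \<and> v \<noteq> (0,0,0,0) \<and> (\<forall>w\<in>pclass4 Fq v. psi4 w)) \<longleftrightarrow> (v \<in> Fq\<times>Fq\<times>Fq\<times>Fq \<and> psi4 v)"
      using hom4_all[OF mclosed_Fq hom_psi4, of v] by blast
  qed
  finally show ?thesis .
qed

end

context mainctx
begin

lemma conj_pair: "z1 \<in> Fq \<Longrightarrow> z2 \<in> Fq \<Longrightarrow> (z1 + eps*z2)^q = z1 - eps*z2"
  by (simp add: frob_add power_mult_distrib eps_q Fq_iff)

lemma m_ne0: assumes X: "X \<in> Fq" and Z: "Z \<in> Fq" and nz: "\<not>(X = 0 \<and> Z = 0)" shows "b*X+Z \<noteq> 0"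
proof
  assume h: "b*X+Z = 0"
  show False
  proof (cases "X = 0")
    case True thus False using h nz by simp
  next
    case False
    have "b*X = -Z" using h by (simp add: eq_neg_iff_add_eq_0)
    hence "b = -Z/X" using False by (simp add: field_simps)
    moreover have "-Z/X \<in> Fq" using X Z Fq_neg Fq_divide by blast
    ultimately show False using b_notin by simp
  qed
qed

lemma dcomps: "comp1 q eps d = 1" "comp2 q eps d = 0"
  using comp1_eq[of 1 0] comp2_eq[of 1 0] d1 by simp_all

lemma S_comp:
  assumes t1: "t1 \<in> Fq" and t2: "t2 \<in> Fq" and X: "X \<in> Fq" and Z: "Z \<in> Fq"
  shows "Sp (t1,t2,X,Z) = comp2 q eps (((t1+eps*t2)^2 - (a*X^2 + c*X*Z + e*Z^2)) * (b*X+Z)^q)"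
proof -
  define a1 where "a1 = comp1 q eps a"
  define a2 where "a2 = comp2 q eps a"
  define b1 where "b1 = comp1 q eps b"
  define b2 where "b2 = comp2 q eps b"
  define c1 where "c1 = comp1 q eps c"
  define c2 where "c2 = comp2 q eps c"
  define e1 where "e1 = comp1 q eps e"
  define e2 where "e2 = comp2 q eps e"
  have ab: "a = a1 + eps*a2" "b = b1 + eps*b2" "c = c1 + eps*c2" "e = e1 + eps*e2"
    unfolding a1_def a2_def b1_def b2_def c1_def c2_def e1_def e2_def by (rule comp_props(3))+
  have mem: "a1 \<in> Fq" "a2 \<in> Fq" "b1 \<in> Fq" "b2 \<in> Fq" "c1 \<in> Fq" "c2 \<in> Fq" "e1 \<in> Fq" "e2 \<in> Fq"
    unfolding a1_def a2_def b1_def b2_def c1_def c2_def e1_def e2_def by (rule comp_props)+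
  have bq: "(b*X+Z)^q = (b1 - eps*b2)*X + Z"
  proof -
    have "(b*X+Z)^q = b^q * X^q + Z^q" by (simp add: frob_add power_mult_distrib)
    also have "b^q = b1 - eps*b2" using conj_pair[OF mem(3,4)] ab(2) by simp
    also have "X^q = X" using X Fq_iff by blast
    also have "Z^q = Z" using Z Fq_iff by blast
    finally show ?thesis .
  qed
  define Pr where "Pr = ((t1^2+\<omega>*t2^2 - (a1*X^2+c1*X*Z+e1*Z^2))*(b1*X+Z) - \<omega>*(2*t1*t2 - (a2*X^2+c2*X*Z+e2*Z^2))*b2*X)"
  define Sx where "Sx = (2 * t1 * t2 * (b1 * X + 1 * Z) - (t1^2 + \<omega> * t2^2) * (b2 * X + 0 * Z)
         + (- a2 * b1 + a1 * b2) * X^3 + (b2 * c1 - b1 * c2 - a2 * 1 + a1 * 0) * X^2 * Z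
         + (- c2 * 1 + c1 * 0 + b2 * e1 - b1 * e2) * X * Z^2 + (0 * e1 - 1 * e2) * Z^3)"
  have key: "((t1+eps*t2)^2 - (a*X^2 + c*X*Z + e*Z^2)) * (b*X+Z)^q = Pr + eps*Sx"
    unfolding bq Pr_def Sx_def
    using key_id[of \<omega> eps t1 t2 a1 a2 X c1 c2 Z e1 e2 b1 b2] eps ab(1,3,4) by simp
  have PrF: "Pr \<in> Fq" unfolding Pr_def
    by (intro Fq_add Fq_diff Fq_mult Fq_neg Fq_power Fq_0 Fq_1 Fq_2 mem t1 t2 X Z \<omega>_in)
  have SxF: "Sx \<in> Fq" unfolding Sx_def
    by (intro Fq_add Fq_diff Fq_mult Fq_neg Fq_power Fq_0 Fq_1 Fq_2 mem t1 t2 X Z \<omega>_in)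
  have "comp2 q eps (Pr + eps*Sx) = Sx" by (rule comp2_eq[OF PrF SxF])
  moreover have "Sp (t1,t2,X,Z) = Sx"
    unfolding surface_poly_def Let_def Sx_def dcomps a1_def a2_def b1_def b2_def c1_def c2_def e1_def e2_def
    by simp
  ultimately show ?thesis using key by simp
qed

lemma Y_in:
  assumes t1: "t1 \<in> Fq" and t2: "t2 \<in> Fq" and X: "X \<in> Fq" and Z: "Z \<in> Fq" and nz: "\<not>(X = 0 \<and> Z = 0)"
  shows "((t1+eps*t2)^2 - (a*X^2 + c*X*Z + e*Z^2)) / (b*X+Z) \<in> Fq \<longleftrightarrow> Sp (t1,t2,X,Z) = 0"
proof -
  define N where "N = (t1+eps*t2)^2 - (a*X^2 + c*X*Z + e*Z^2)"
  define m where "m = b*X+Z"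
  have m: "m \<noteq> 0" unfolding m_def by (rule m_ne0[OF X Z nz])
  have mq: "m^q \<noteq> 0" using m by simp
  have mm: "m * m^q \<in> Fq" unfolding Fq_iff by (simp add: power_mult_distrib pow_q2 mult.commute)
  have mmne: "m * m^q \<noteq> 0" using m mq by simp
  have "N/m \<in> Fq \<longleftrightarrow> N * m^q \<in> Fq"
  proof
    assume h: "N/m \<in> Fq"
    have "N * m^q = (N/m) * (m * m^q)" using m by simp
    thus "N * m^q \<in> Fq" using Fq_mult[OF h mm] by simp
  next
    assume h: "N * m^q \<in> Fq"
    have "N/m = (N * m^q)/(m * m^q)" using mq by simp
    thus "N/m \<in> Fq" using Fq_divide[OF h mm] by simp
  qed
  also have "\<dots> \<longleftrightarrow> comp2 q eps (N * m^q) = 0" by (rule Fq_comp2)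
  also have "comp2 q eps (N * m^q) = Sp (t1,t2,X,Z)" unfolding N_def m_def using S_comp[OF t1 t2 X Z] by simp
  finally show ?thesis unfolding N_def m_def .
qed

lemma Q_split: "T1.Q (X,Y,Z) = Y*(b*X+Z) + (a*X^2 + c*X*Z + e*Z^2)"
  unfolding T1.Q_def qf_def using d1 by (simp add: algebra_simps power2_eq_square)

definition V3 :: "('a\<times>'a\<times>'a) set" where
  "V3 = {v \<in> Fq\<times>Fq\<times>Fq. v \<noteq> (0,0,0) \<and> kk (T1.Q v) = 2}"

definition Fb :: "'a\<times>'a\<times>'a \<Rightarrow> ('a\<times>'a\<times>'a\<times>'a) set" where
  "Fb w = {v \<in> Fq\<times>Fq\<times>Fq\<times>Fq. fst (snd (snd v)) = fst w \<and> snd (snd (snd v)) = snd (snd w)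
            \<and> (fst v + eps * fst (snd v))^2 = T1.Q w}"

lemma V3_facts:
  assumes w: "(X,Y,Z) \<in> V3"
  shows "X \<in> Fq" "Y \<in> Fq" "Z \<in> Fq" "T1.Q (X,Y,Z) \<noteq> 0" "\<not>(X = 0 \<and> Z = 0)"
proof -
  show "X \<in> Fq" "Y \<in> Fq" "Z \<in> Fq" using w unfolding V3_def by auto
  have "kk (T1.Q (X,Y,Z)) = 2" using w unfolding V3_def by auto
  thus Qne: "T1.Q (X,Y,Z) \<noteq> 0" by (auto simp: kk_def)
  show "\<not>(X = 0 \<and> Z = 0)"
  proof
    assume "X = 0 \<and> Z = 0"
    hence "T1.Q (X,Y,Z) = 0" using Q_split by simp
    thus False using Qne by simp
  qed
qed

lemma Fb_card: assumes w: "w \<in> V3" shows "card (Fb w) = 2"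
proof -
  obtain X Y Z where wx: "w = (X,Y,Z)" by (cases w) auto
  have "kk (T1.Q w) = 2" using w unfolding V3_def by auto
  then obtain s where s: "s \<noteq> 0" "s^2 = T1.Q w" using kk_eq2 by blast
  obtain s1 s2 where ss: "s1 \<in> Fq" "s2 \<in> Fq" "s = s1 + eps*s2" using decomp by blast
  have ms: "-s = (-s1) + eps*(-s2)" using ss(3) by simp
  have Xq: "X \<in> Fq" and Zq: "Z \<in> Fq" using V3_facts[OF w[unfolded wx]] by auto
  have eq: "Fb w = {(s1,s2,X,Z), (-s1,-s2,X,Z)}"
  proof (rule set_eqI, rule iffI)
    fix v assume v: "v \<in> Fb w"
    then obtain t1 t2 where vt: "v = (t1,t2,X,Z)" "t1 \<in> Fq" "t2 \<in> Fq" "(t1 + eps*t2)^2 = s^2"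
      unfolding Fb_def wx using s(2) wx by (cases v) auto
    hence "t1 + eps*t2 = s \<or> t1 + eps*t2 = -s" by (simp add: power2_eq_iff)
    thus "v \<in> {(s1,s2,X,Z), (-s1,-s2,X,Z)}"
    proof
      assume "t1 + eps*t2 = s"
      hence "t1 = s1 \<and> t2 = s2" using decomp_unique[OF vt(2,3) ss(1,2)] ss(3) by simp
      thus ?thesis using vt(1) by simp
    next
      assume "t1 + eps*t2 = -s"
      hence "t1 = -s1 \<and> t2 = -s2" using decomp_unique[OF vt(2,3) Fq_neg[OF ss(1)] Fq_neg[OF ss(2)]] ms by simp
      thus ?thesis using vt(1) by simp
    qed
  next
    fix v assume "v \<in> {(s1,s2,X,Z), (-s1,-s2,X,Z)}"
    hence "v = (s1,s2,X,Z) \<or> v = (-s1,-s2,X,Z)" by blast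
    thus "v \<in> Fb w"
    proof
      assume "v = (s1,s2,X,Z)"
      thus ?thesis unfolding Fb_def using ss Xq Zq s(2) wx by simp
    next
      assume "v = (-s1,-s2,X,Z)"
      moreover have "(-s1 + eps*(-s2))^2 = s^2" using ms by (simp add: power2_eq_iff)
      ultimately show ?thesis unfolding Fb_def using ss Xq Zq s(2) wx Fq_neg by simp
    qed
  qed
  have ne: "(s1,s2,X,Z) \<noteq> (-s1,-s2,X,Z)"
  proof
    assume "(s1,s2,X,Z) = (-s1,-s2,X,Z)"
    hence "2*s1 = 0" "2*s2 = 0" by auto
    hence "s1 = 0" "s2 = 0" using two_ne0 by auto
    thus False using s(1) ss(3) by simp
  qed
  show ?thesis unfolding eq using ne by simp
qed

lemma V4_union: "{v \<in> Fq\<times>Fq\<times>Fq\<times>Fq. psi4 v} = (\<Union>w\<in>V3. Fb w)"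
proof (rule set_eqI, rule iffI)
  fix v assume v: "v \<in> {v \<in> Fq\<times>Fq\<times>Fq\<times>Fq. psi4 v}"
  then obtain t1 t2 X Z where vv: "v = (t1,t2,X,Z)" by (cases v) auto
  have q: "t1 \<in> Fq" "t2 \<in> Fq" "X \<in> Fq" "Z \<in> Fq" using v vv by auto
  have S0: "Sp (t1,t2,X,Z) = 0" and tnz: "\<not>(t1 = 0 \<and> t2 = 0)" and xnz: "\<not>(X = 0 \<and> Z = 0)"
    using v vv unfolding psi4_def by auto
  define Y where "Y = ((t1+eps*t2)^2 - (a*X^2 + c*X*Z + e*Z^2)) / (b*X+Z)"
  have Yq: "Y \<in> Fq" unfolding Y_def using Y_in[OF q xnz] S0 by simp
  have m: "b*X+Z \<noteq> 0" by (rule m_ne0[OF q(3,4) xnz])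
  have Qw: "T1.Q (X,Y,Z) = (t1+eps*t2)^2" unfolding Q_split Y_def using m by simp
  have tne: "t1 + eps*t2 \<noteq> 0"
  proof
    assume "t1 + eps*t2 = 0"
    hence "t1 + eps*t2 = 0 + eps*0" by simp
    hence "t1 = 0 \<and> t2 = 0" using decomp_unique[OF q(1,2) Fq_0 Fq_0] by blast
    thus False using tnz by simp
  qed
  have "kk (T1.Q (X,Y,Z)) = 2" unfolding kk_eq2 Qw using tne by blast
  hence w: "(X,Y,Z) \<in> V3" unfolding V3_def using q Yq xnz by auto
  have "v \<in> Fb (X,Y,Z)" unfolding Fb_def vv using q Qw by simp
  thus "v \<in> (\<Union>w\<in>V3. Fb w)" using w by blast
next
  fix v assume "v \<in> (\<Union>w\<in>V3. Fb w)"
  then obtain w where w: "w \<in> V3" "v \<in> Fb w" by blast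
  obtain X Y Z where wx: "w = (X,Y,Z)" by (cases w) auto
  note wf = V3_facts[OF w(1)[unfolded wx]]
  obtain t1 t2 where vt: "v = (t1,t2,X,Z)" "t1 \<in> Fq" "t2 \<in> Fq" "(t1 + eps*t2)^2 = T1.Q (X,Y,Z)"
    using w(2) unfolding Fb_def wx by (cases v) auto
  have m: "b*X+Z \<noteq> 0" by (rule m_ne0[OF wf(1,3,5)])
  have "((t1+eps*t2)^2 - (a*X^2 + c*X*Z + e*Z^2)) / (b*X+Z) = Y"
    unfolding vt(4) Q_split using m by simp
  hence S0: "Sp (t1,t2,X,Z) = 0" using Y_in[OF vt(2,3) wf(1,3,5)] wf(2) by simp
  have tnz: "\<not>(t1 = 0 \<and> t2 = 0)"
  proof
    assume "t1 = 0 \<and> t2 = 0"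
    hence "T1.Q (X,Y,Z) = 0" using vt(4) by simp
    thus False using wf(4) by simp
  qed
  show "v \<in> {v \<in> Fq\<times>Fq\<times>Fq\<times>Fq. psi4 v}" unfolding vt(1) psi4_def using vt(2,3) wf S0 tnz by simp
qed

lemma Fb_disj: assumes "w1 \<in> V3" "w2 \<in> V3" "w1 \<noteq> w2" shows "Fb w1 \<inter> Fb w2 = {}"
proof (rule ccontr)
  assume "Fb w1 \<inter> Fb w2 \<noteq> {}"
  then obtain v where v: "v \<in> Fb w1" "v \<in> Fb w2" by blast
  obtain X1 Y1 Z1 where w1: "w1 = (X1,Y1,Z1)" by (cases w1) auto
  obtain X2 Y2 Z2 where w2: "w2 = (X2,Y2,Z2)" by (cases w2) auto
  have e: "X1 = X2" "Z1 = Z2" "T1.Q w1 = T1.Q w2" using v unfolding Fb_def w1 w2 by auto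
  note wf = V3_facts[OF assms(1)[unfolded w1]]
  have m: "b*X1+Z1 \<noteq> 0" by (rule m_ne0[OF wf(1,3,5)])
  have "Y1*(b*X1+Z1) = Y2*(b*X1+Z1)" using e(3) unfolding w1 w2 Q_split e(1,2) by simp
  hence "Y1 = Y2" using m by simp
  thus False using assms(3) w1 w2 e by simp
qed

lemma V4_card: "card {v \<in> Fq\<times>Fq\<times>Fq\<times>Fq. psi4 v} = 2 * card V3"
proof -
  have fin: "finite V3" by simp
  have finF: "\<forall>w\<in>V3. finite (Fb w)" by simp
  have disj: "\<forall>i\<in>V3. \<forall>j\<in>V3. i \<noteq> j \<longrightarrow> Fb i \<inter> Fb j = {}" using Fb_disj by blast
  have "card (\<Union>w\<in>V3. Fb w) = (\<Sum>w\<in>V3. card (Fb w))"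
    by (rule card_UN_disjoint[OF fin finF disj])
  also have "\<dots> = (\<Sum>w\<in>V3. 2)" using Fb_card by simp
  finally show ?thesis unfolding V4_union by simp
qed

lemma main_result:
  "real (E_q q a b c d e) =
    (real (card (surface_points q eps \<omega> a b c d e))
     - real (card {P \<in> surface_points q eps \<omega> a b c d e.
                    \<forall>v\<in>P. fst v = 0 \<and> fst (snd v) = 0})
     - real (card {P \<in> surface_points q eps \<omega> a b c d e.
                    \<forall>v\<in>P. fst (snd (snd v)) = 0 \<and> snd (snd (snd v)) = 0})) / 2"
proof -
  let ?N = "card (Fq - {0})"
  let ?W = "{P \<in> proj_space3 Fq. \<forall>v\<in>P. psi4 v}"
  have Npos: "?N > 0"
  proof -
    have "1 \<in> Fq - {0}" by simp
    hence ne: "Fq - {0} \<noteq> {}" by blast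
    have "finite (Fq - {0})" by simp
    thus ?thesis using ne card_gt_0_iff by blast
  qed
  have "?N * card ?W = 2 * card V3" using W_card V4_card by simp
  also have "card V3 = ?N * card Eset" using Eset_card unfolding V3_def by simp
  finally have eqn0: "?N * card ?W = 2 * (?N * card Eset)" .
  have "2 * (?N * card Eset) = ?N * (2 * card Eset)" by (rule mult.left_commute)
  with eqn0 have eqn: "?N * card ?W = ?N * (2 * card Eset)" by (rule trans)
  have N0: "?N \<noteq> 0" using Npos by (rule less_imp_neq[symmetric])
  have cW: "card ?W = 2 * card Eset" by (rule mult_left_cancel[OF N0, THEN iffD1, OF eqn])
  show ?thesis unfolding surface_split Eq_Eset cW by simp
qed

end

theorem mainTheorem7:
  fixes q :: nat and \<omega> eps a b c d e :: "'a::{finite,field}"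
  assumes q_pp: "\<exists>p k. prime p \<and> k > 0 \<and> q = p ^ k"
    and q_odd: "odd q"
    and card: "card (UNIV::'a set) = q ^ 2"
    and \<omega>_in: "\<omega> \<in> subfield_q q"
    and \<omega>_nonsq: "\<not> (\<exists>y \<in> subfield_q q. y ^ 2 = \<omega>)"
    and eps: "eps ^ 2 = \<omega>"
    and nonsing: "conic_nonsingular a b c d e"
    and d1: "d = 1"
    and b_notin: "b \<notin> subfield_q q"
    and sq: "\<exists>s. s \<noteq> 0 \<and> s ^ 2 = - b * c * d + a * d ^ 2 + b ^ 2 * e"
  shows "real (E_q q a b c d e) =
    (real (card (surface_points q eps \<omega> a b c d e))
     - real (card {P \<in> surface_points q eps \<omega> a b c d e.
                    \<forall>v\<in>P. fst v = 0 \<and> fst (snd v) = 0})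
     - real (card {P \<in> surface_points q eps \<omega> a b c d e.
                    \<forall>v\<in>P. fst (snd (snd v)) = 0 \<and> snd (snd (snd v)) = 0})) / 2"
proof -
  interpret mainctx q \<omega> eps a b c d e
    by unfold_locales (fact q_pp q_odd card \<omega>_in \<omega>_nonsq eps nonsing d1 b_notin sq)+
  show ?thesis by (rule main_result)
qed

end
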